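(* For any $\epsilon>0$ there exists a family $\mathcal C$ of tree-structured Ising models with $n$ leaves labeled $1,\dots,n$, with $\log|\mathcal C|\le O(n\log(n/\epsilon))$, such that for any tree-structured Ising model with leaves $1,\dots,n$ there exists a model in $\mathcal C$ whose leaf distribution is within total variation distance $\epsilon$ of the leaf distribution of the given model.
   Context: A tree-structured Ising model is given by a tree $T=(V,E)$ whose leaves are labeled $1,\dots,n$ (standing assumption: every non-leaf node has degree $3$) with edge weights $\theta_e\in[-1,1]$; spins $x_v\in\{-1,1\}$ at all nodes have probability $\propto\prod_{(u,v)\in E}\frac{1+\theta_{uv}x_ux_v}{2}$, and the leaf distribution is the marginal on the leaf spins. Total variation distance is $\frac12\sum_x|\mu(x)-\nu(x)|$. *)

theory Defs
  imports "HOL-Library.FuncSet" Complex_Main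
begin

text \<open>A tree-structured Ising model on leaves 1..n is encoded as a triple (V, E, theta):
  V : finite set of nodes (natural numbers); the leaves are exactly the nodes 1..n
      (the leaf with label i is the node i);
  E : set of undirected edges, each a 2-element subset of V;
  theta : edge weight function (only its values on E matter).\<close>

type_synonym ising = "nat set \<times> nat set set \<times> (nat set \<Rightarrow> real)"

definition adj :: "nat set set \<Rightarrow> (nat \<times> nat) set" where
  "adj E = {(u, v). {u, v} \<in> E}"

definition connected_graph :: "nat set \<Rightarrow> nat set set \<Rightarrow> bool" where
  "connected_graph V E \<longleftrightarrow> (\<forall>u\<in>V. \<forall>v\<in>V. (u, v) \<in> (adj E)\<^sup>*)"

definition acyclic_graph :: "nat set set \<Rightarrow> bool" where
  "acyclic_graph E \<longleftrightarrow> (\<forall>u v. {u, v} \<in> E \<longrightarrow> (u, v) \<notin> (adj (E - {{u, v}}))\<^sup>*)"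

definition is_tree :: "nat set \<Rightarrow> nat set set \<Rightarrow> bool" where
  "is_tree V E \<longleftrightarrow> finite V \<and> V \<noteq> {} \<and>
     (\<forall>e\<in>E. \<exists>u v. e = {u, v} \<and> u \<noteq> v \<and> u \<in> V \<and> v \<in> V) \<and>
     connected_graph V E \<and> acyclic_graph E"

definition degree :: "nat set set \<Rightarrow> nat \<Rightarrow> nat" where
  "degree E v = card {e \<in> E. v \<in> e}"

definition ising_model :: "nat \<Rightarrow> ising \<Rightarrow> bool" where
  "ising_model n M = (case M of (V, E, \<theta>) \<Rightarrow>
     is_tree V E \<and>
     {v \<in> V. degree E v \<le> 1} = {1..n} \<and>
     (\<forall>v\<in>V. v \<notin> {1..n} \<longrightarrow> degree E v = 3) \<and>
     (\<forall>e\<in>E. -1 \<le> \<theta> e \<and> \<theta> e \<le> 1))"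

definition spins :: "nat set \<Rightarrow> (nat \<Rightarrow> real) set" where
  "spins S = S \<rightarrow>\<^sub>E {-1, 1}"

definition weight :: "ising \<Rightarrow> (nat \<Rightarrow> real) \<Rightarrow> real" where
  "weight M x = (case M of (V, E, \<theta>) \<Rightarrow> \<Prod>e\<in>E. (1 + \<theta> e * (\<Prod>v\<in>e. x v)) / 2)"

definition partition_fn :: "ising \<Rightarrow> real" where
  "partition_fn M = (\<Sum>x\<in>spins (fst M). weight M x)"

definition leaf_dist :: "nat \<Rightarrow> ising \<Rightarrow> (nat \<Rightarrow> real) \<Rightarrow> real" where
  "leaf_dist n M y =
     (\<Sum>x\<in>{x \<in> spins (fst M). restrict x {1..n} = y}. weight M x) / partition_fn M"

definition tv_dist :: "nat \<Rightarrow> ((nat \<Rightarrow> real) \<Rightarrow> real) \<Rightarrow> ((nat \<Rightarrow> real) \<Rightarrow> real) \<Rightarrow> real" where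
  "tv_dist n \<mu> \<nu> = (1/2) * (\<Sum>y\<in>spins {1..n}. \<bar>\<mu> y - \<nu> y\<bar>)"

end

theory Submission
  imports Defs
begin


inductive tree_ind :: "nat set \<Rightarrow> nat set set \<Rightarrow> bool" where
  single: "tree_ind {r} {}"
| join: "tree_ind V1 E1 \<Longrightarrow> tree_ind V2 E2 \<Longrightarrow> V1 \<inter> V2 = {} \<Longrightarrow> u \<in> V1 \<Longrightarrow> v \<in> V2 \<Longrightarrow>
     tree_ind (V1 \<union> V2) (insert {u, v} (E1 \<union> E2))"

definition edges_ok :: "nat set \<Rightarrow> nat set set \<Rightarrow> bool" where
  "edges_ok V E \<longleftrightarrow> (\<forall>e\<in>E. e \<subseteq> V \<and> card e = 2)"

lemma edges_ok_sub: "edges_ok V E \<Longrightarrow> e \<in> E \<Longrightarrow> e \<subseteq> V"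
  unfolding edges_ok_def by blast

lemma edges_ok_card: "edges_ok V E \<Longrightarrow> e \<in> E \<Longrightarrow> card e = 2"
  unfolding edges_ok_def by blast

lemma edges_ok_pair: "edges_ok V E \<Longrightarrow> e \<in> E \<Longrightarrow> \<exists>a b. e = {a, b} \<and> a \<noteq> b \<and> a \<in> V \<and> b \<in> V"
  unfolding edges_ok_def by (metis card_2_iff insert_subset)

lemma tree_ind_basic:
  assumes "tree_ind V E"
  shows "finite V \<and> V \<noteq> {} \<and> finite E \<and> edges_ok V E \<and> card V = card E + 1"
  using assms
proof (induction rule: tree_ind.induct)
  case (single r)
  then show ?case by (simp add: edges_ok_def)
next
  case (join V1 E1 V2 E2 u v)
  have f1: "finite V1" "finite E1" "edges_ok V1 E1" "card V1 = card E1 + 1" "V1 \<noteq> {}"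
    using join.IH(1) by auto
  have f2: "finite V2" "finite E2" "edges_ok V2 E2" "card V2 = card E2 + 1"
    using join.IH(2) by auto
  have s1: "e \<subseteq> V1 \<and> e \<noteq> {}" if "e \<in> E1" for e
    using f1(3) that unfolding edges_ok_def by fastforce
  have s2: "e \<subseteq> V2 \<and> e \<noteq> {}" if "e \<in> E2" for e
    using f2(3) that unfolding edges_ok_def by fastforce
  have d: "E1 \<inter> E2 = {}"
  proof (rule ccontr)
    assume "E1 \<inter> E2 \<noteq> {}"
    then obtain e where "e \<in> E1" "e \<in> E2" by blast
    then have "e \<subseteq> V1" "e \<subseteq> V2" "e \<noteq> {}" using s1 s2 by auto
    then show False using join.hyps(3) by blast
  qed
  have n: "{u, v} \<notin> E1 \<union> E2"
  proof
    assume "{u, v} \<in> E1 \<union> E2"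
    then have "{u,v} \<subseteq> V1 \<or> {u,v} \<subseteq> V2" using s1 s2 by blast
    then show False using join.hyps(3,4,5) by blast
  qed
  have c1: "card (insert {u, v} (E1 \<union> E2)) = card E1 + card E2 + 1"
    using d n f1 f2 by (simp add: card_Un_disjoint)
  have c2: "card (V1 \<union> V2) = card V1 + card V2"
    using join.hyps(3) f1 f2 by (simp add: card_Un_disjoint)
  have c3: "edges_ok (V1 \<union> V2) (insert {u, v} (E1 \<union> E2))"
  proof -
    have "u \<noteq> v" using join.hyps(3,4,5) by blast
    then have "card {u, v} = 2" by simp
    then show ?thesis using f1(3) f2(3) join.hyps(4,5) unfolding edges_ok_def by auto
  qed
  have c4: "card (V1 \<union> V2) = card (insert {u, v} (E1 \<union> E2)) + 1" using c1 c2 f1 f2 by linarith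
  show ?case using c3 c4 f1 f2 by simp
qed

lemma sym_adj: "sym (adj E)"
  unfolding adj_def sym_def by (auto simp: insert_commute)

lemma adj_iff: "(a, b) \<in> adj E \<longleftrightarrow> {a, b} \<in> E"
  unfolding adj_def by simp

lemma rt_sym: "(a, b) \<in> (adj E)\<^sup>* \<Longrightarrow> (b, a) \<in> (adj E)\<^sup>*"
  using sym_rtrancl[OF sym_adj] unfolding sym_def by blast

lemma adj_mono: "E \<subseteq> F \<Longrightarrow> (a, b) \<in> (adj E)\<^sup>* \<Longrightarrow> (a, b) \<in> (adj F)\<^sup>*"
proof -
  assume "E \<subseteq> F" "(a, b) \<in> (adj E)\<^sup>*"
  moreover have "adj E \<subseteq> adj F" using \<open>E \<subseteq> F\<close> unfolding adj_def by auto
  ultimately show ?thesis using rtrancl_mono by blast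
qed
lemma acyclic_mono: "acyclic_graph F \<Longrightarrow> E \<subseteq> F \<Longrightarrow> acyclic_graph E"
  unfolding acyclic_graph_def
proof (intro allI impI)
  fix u v assume "\<forall>u v. {u, v} \<in> F \<longrightarrow> (u, v) \<notin> (adj (F - {{u, v}}))\<^sup>*" "E \<subseteq> F" "{u, v} \<in> E"
  then show "(u, v) \<notin> (adj (E - {{u, v}}))\<^sup>*" using adj_mono[of "E - {{u, v}}" "F - {{u, v}}" u v] by blast
qed


lemma join_conn:
  assumes "connected_graph V1 E1" "connected_graph V2 E2" "u \<in> V1" "v \<in> V2"
  shows "connected_graph (V1 \<union> V2) (insert {u, v} (E1 \<union> E2))"
proof -
  let ?E = "insert {u, v} (E1 \<union> E2)"
  have m1: "(a, b) \<in> (adj ?E)\<^sup>*" if "a \<in> V1" "b \<in> V1" for a b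
    using assms(1) that adj_mono[of E1 ?E a b] unfolding connected_graph_def by blast
  have m2: "(a, b) \<in> (adj ?E)\<^sup>*" if "a \<in> V2" "b \<in> V2" for a b
    using assms(2) that adj_mono[of E2 ?E a b] unfolding connected_graph_def by blast
  have uv: "(u, v) \<in> (adj ?E)\<^sup>*" by (simp add: adj_iff r_into_rtrancl)
  have m3: "(a, b) \<in> (adj ?E)\<^sup>*" if "a \<in> V1" "b \<in> V2" for a b
    using m1[OF that(1) assms(3)] uv m2[OF assms(4) that(2)] by (meson rtrancl_trans)
  show ?thesis unfolding connected_graph_def
    using m1 m2 m3 rt_sym by blast
qed

lemma join_acyc_left:
  assumes ac1: "acyclic_graph E1" and ok1: "edges_ok V1 E1" and ok2: "edges_ok V2 E2"
    and dj: "V1 \<inter> V2 = {}" and uV: "u \<in> V1" and vV: "v \<in> V2" and ab: "{a, b} \<in> E1"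
  shows "(a, b) \<notin> (adj (insert {u, v} (E1 \<union> E2) - {{a, b}}))\<^sup>*"
proof
  let ?G = "insert {u, v} (E1 \<union> E2) - {{a, b}}"
  let ?H = "E1 - {{a, b}}"
  assume path: "(a, b) \<in> (adj ?G)\<^sup>*"
  have abV: "a \<in> V1" "b \<in> V1" using ok1 ab edges_ok_sub by blast+
  have inv: "x \<in> V1 \<union> V2 \<and> (x \<in> V1 \<longrightarrow> (a, x) \<in> (adj ?H)\<^sup>*) \<and> (x \<in> V2 \<longrightarrow> (a, u) \<in> (adj ?H)\<^sup>*)"
    if "(a, x) \<in> (adj ?G)\<^sup>*" for x
    using that
  proof (induction rule: rtrancl_induct)
    case base
    then show ?case using abV dj by blast
  next
    case (step x y)
    have xy: "{x, y} \<in> ?G" using step.hyps(2) by (simp add: adj_iff)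
    then consider "{x, y} = {u, v}" | "{x, y} \<in> ?H" | "{x, y} \<in> E2" by blast
    then show ?case
    proof cases
      case 1
      then have "(x = u \<and> y = v) \<or> (x = v \<and> y = u)" by (simp add: doubleton_eq_iff)
      then show ?thesis using step.IH dj uV vV by blast
    next
      case 2
      then have "x \<in> V1" "y \<in> V1" using ok1 edges_ok_sub by blast+
      moreover have "(x, y) \<in> adj ?H" using 2 by (simp add: adj_iff)
      ultimately have xy': "x \<in> V1" "y \<in> V1" "(x, y) \<in> adj ?H" by auto
      have "(a, x) \<in> (adj ?H)\<^sup>*" using step.IH xy'(1) by blast
      then have "(a, y) \<in> (adj ?H)\<^sup>*" using xy'(3) by (rule rtrancl_into_rtrancl)
      moreover have "y \<notin> V2" using xy'(2) dj by blast
      ultimately show ?thesis using xy'(2) by blast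
    next
      case 3
      then have "x \<in> V2" "y \<in> V2" using ok2 edges_ok_sub by blast+
      then show ?thesis using step.IH dj by blast
    qed
  qed
  have "(a, b) \<in> (adj ?H)\<^sup>*" using inv[OF path] abV by blast
  then show False using ac1 ab unfolding acyclic_graph_def by blast
qed

lemma join_acyc_mid:
  assumes ok1: "edges_ok V1 E1" and ok2: "edges_ok V2 E2"
    and dj: "V1 \<inter> V2 = {}" and uV: "u \<in> V1" and vV: "v \<in> V2" and ab: "{a, b} = {u, v}"
  shows "(a, b) \<notin> (adj (insert {u, v} (E1 \<union> E2) - {{a, b}}))\<^sup>*"
proof
  let ?G = "insert {u, v} (E1 \<union> E2) - {{a, b}}"
  assume path: "(a, b) \<in> (adj ?G)\<^sup>*"
  have aV: "a \<in> V1 \<union> V2" using ab uV vV by (metis UnI1 UnI2 doubleton_eq_iff)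
  have inv: "x \<in> V1 \<union> V2 \<and> (x \<in> V1 \<longleftrightarrow> a \<in> V1)" if "(a, x) \<in> (adj ?G)\<^sup>*" for x
    using that
  proof (induction rule: rtrancl_induct)
    case base
    then show ?case using aV by simp
  next
    case (step x y)
    have xy: "{x, y} \<in> ?G" using step.hyps(2) by (simp add: adj_iff)
    then have "{x, y} \<in> E1 \<or> {x, y} \<in> E2" using ab by blast
    then have "(x \<in> V1 \<and> y \<in> V1) \<or> (x \<in> V2 \<and> y \<in> V2)" using ok1 ok2 edges_ok_sub by blast
    then show ?case using step.IH dj by blast
  qed
  have "(a = u \<and> b = v) \<or> (a = v \<and> b = u)" using ab by (simp add: doubleton_eq_iff)
  then show False using inv[OF path] dj uV vV by blast
qed

lemma tree_ind_is_tree: "tree_ind V E \<Longrightarrow> is_tree V E"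
proof (induction rule: tree_ind.induct)
  case (single r)
  then show ?case unfolding is_tree_def connected_graph_def acyclic_graph_def by simp
next
  case (join V1 E1 V2 E2 u v)
  have tj: "tree_ind (V1 \<union> V2) (insert {u, v} (E1 \<union> E2))"
    using tree_ind.join[OF join.hyps] .
  have b: "finite (V1 \<union> V2)" "V1 \<union> V2 \<noteq> {}" "edges_ok (V1 \<union> V2) (insert {u, v} (E1 \<union> E2))"
    using tree_ind_basic[OF tj] by auto
  have ok1: "edges_ok V1 E1" using tree_ind_basic[OF join.hyps(1)] by simp
  have ok2: "edges_ok V2 E2" using tree_ind_basic[OF join.hyps(2)] by simp
  have cc1: "connected_graph V1 E1" using join.IH(1) unfolding is_tree_def by simp
  have cc2: "connected_graph V2 E2" using join.IH(2) unfolding is_tree_def by simp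
  have c: "connected_graph (V1 \<union> V2) (insert {u, v} (E1 \<union> E2))"
    using join_conn[OF cc1 cc2 join.hyps(4,5)] .
  have ac1: "acyclic_graph E1" using join.IH(1) unfolding is_tree_def by simp
  have ac2: "acyclic_graph E2" using join.IH(2) unfolding is_tree_def by simp
  have a: "acyclic_graph (insert {u, v} (E1 \<union> E2))"
    unfolding acyclic_graph_def
  proof (intro allI impI)
    fix a b assume "{a, b} \<in> insert {u, v} (E1 \<union> E2)"
    then consider "{a, b} = {u, v}" | "{a, b} \<in> E1" | "{a, b} \<in> E2" by blast
    then show "(a, b) \<notin> (adj (insert {u, v} (E1 \<union> E2) - {{a, b}}))\<^sup>*"
    proof cases
      case 1
      then show ?thesis using join_acyc_mid[OF ok1 ok2 join.hyps(3,4,5)] by blast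
    next
      case 2
      then show ?thesis using join_acyc_left[OF ac1 ok1 ok2 join.hyps(3,4,5)] by blast
    next
      case 3
      have dj': "V2 \<inter> V1 = {}" using join.hyps(3) by blast
      have eq: "insert {u, v} (E1 \<union> E2) = insert {v, u} (E2 \<union> E1)" by (auto simp: insert_commute)
      show ?thesis unfolding eq using join_acyc_left[OF ac2 ok2 ok1 dj' join.hyps(5,4) 3] .
    qed
  qed
  have "\<forall>e\<in>insert {u, v} (E1 \<union> E2). \<exists>x y. e = {x, y} \<and> x \<noteq> y \<and> x \<in> V1 \<union> V2 \<and> y \<in> V1 \<union> V2"
    using edges_ok_pair[OF b(3)] by blast
  then show ?case unfolding is_tree_def using b(1,2) a c by blast
qed



lemma is_tree_edges: "is_tree V E \<Longrightarrow> edges_ok V E"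
  unfolding is_tree_def edges_ok_def by fastforce

lemma is_tree_finE: "is_tree V E \<Longrightarrow> finite E"
proof -
  assume t: "is_tree V E"
  then have "E \<subseteq> Pow V" using is_tree_edges edges_ok_sub by blast
  moreover have "finite V" using t unfolding is_tree_def by simp
  ultimately show ?thesis by (meson finite_Pow_iff finite_subset)
qed

lemma comp_path:
  assumes ok: "edges_ok V E" and p: "p \<in> V"
    and path: "(p, w) \<in> (adj (E - {e}))\<^sup>*"
  shows "w \<in> {x \<in> V. (p, x) \<in> (adj (E - {e}))\<^sup>*} \<and>
     (p, w) \<in> (adj {f \<in> E - {e}. f \<subseteq> {x \<in> V. (p, x) \<in> (adj (E - {e}))\<^sup>*}})\<^sup>*"
  using path
proof (induction rule: rtrancl_induct)
  case base
  then show ?case using p by simp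
next
  case (step w y)
  let ?C = "{x \<in> V. (p, x) \<in> (adj (E - {e}))\<^sup>*}"
  have f: "{w, y} \<in> E - {e}" using step.hyps(2) by (simp add: adj_iff)
  then have "y \<in> V" using ok edges_ok_sub by blast
  moreover have py: "(p, y) \<in> (adj (E - {e}))\<^sup>*" using step.hyps by (rule rtrancl_into_rtrancl)
  ultimately have yC: "y \<in> ?C" by simp
  have wC: "w \<in> ?C" using step.IH by simp
  have "{w, y} \<in> {f \<in> E - {e}. f \<subseteq> ?C}" using f yC wC by simp
  then have "(w, y) \<in> adj {f \<in> E - {e}. f \<subseteq> ?C}" by (simp add: adj_iff)
  then have "(p, y) \<in> (adj {f \<in> E - {e}. f \<subseteq> ?C})\<^sup>*" using step.IH
    by (meson rtrancl.rtrancl_into_rtrancl)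
  then show ?case using yC by blast
qed

lemma comp_tree:
  assumes t: "is_tree V E" and p: "p \<in> V" and e: "e \<in> E"
  shows "is_tree {x \<in> V. (p, x) \<in> (adj (E - {e}))\<^sup>*}
                 {f \<in> E - {e}. f \<subseteq> {x \<in> V. (p, x) \<in> (adj (E - {e}))\<^sup>*}}"
proof -
  let ?C = "{x \<in> V. (p, x) \<in> (adj (E - {e}))\<^sup>*}"
  let ?F = "{f \<in> E - {e}. f \<subseteq> ?C}"
  have ok: "edges_ok V E" using t by (rule is_tree_edges)
  have fin: "finite ?C" using t unfolding is_tree_def by simp
  have ne: "?C \<noteq> {}" using p by auto
  have ed: "\<forall>f\<in>?F. \<exists>a b. f = {a, b} \<and> a \<noteq> b \<and> a \<in> ?C \<and> b \<in> ?C"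
  proof
    fix f assume "f \<in> ?F"
    then have "f \<in> E" "f \<subseteq> ?C" by auto
    then obtain a b where "f = {a, b}" "a \<noteq> b" using edges_ok_pair[OF ok] by blast
    then show "\<exists>a b. f = {a, b} \<and> a \<noteq> b \<and> a \<in> ?C \<and> b \<in> ?C" using \<open>f \<subseteq> ?C\<close>
      by (intro exI[of _ a] exI[of _ b]) simp
  qed
  have con: "connected_graph ?C ?F" unfolding connected_graph_def
  proof (intro ballI)
    fix a b assume a: "a \<in> ?C" and b: "b \<in> ?C"
    have "(p, a) \<in> (adj (E - {e}))\<^sup>*" using a by simp
    from conjunct2[OF comp_path[OF ok p this]] have "(p, a) \<in> (adj ?F)\<^sup>*" .
    moreover have "(p, b) \<in> (adj (E - {e}))\<^sup>*" using b by simp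
    from conjunct2[OF comp_path[OF ok p this]] have "(p, b) \<in> (adj ?F)\<^sup>*" .
    ultimately show "(a, b) \<in> (adj ?F)\<^sup>*" using rt_sym by (meson rtrancl_trans)
  qed
  have sub: "?F \<subseteq> E" by blast
  have ac0: "acyclic_graph E" using t unfolding is_tree_def by simp
  have ac: "acyclic_graph ?F" using acyclic_mono[OF ac0 sub] .
  show ?thesis unfolding is_tree_def using fin ne ed con ac by blast
qed

lemma is_tree_tree_ind: "is_tree V E \<Longrightarrow> tree_ind V E"
proof (induction "card E" arbitrary: V E rule: less_induct)
  case less
  have t: "is_tree V E" by fact
  have ok: "edges_ok V E" using t by (rule is_tree_edges)
  have finE: "finite E" using t by (rule is_tree_finE)
  show ?case
  proof (cases "E = {}")
    case True
    obtain r where r: "r \<in> V" using t unfolding is_tree_def by blast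
    have "w = r" if "w \<in> V" for w
    proof -
      have "(r, w) \<in> (adj E)\<^sup>*" using t r that unfolding is_tree_def connected_graph_def by blast
      moreover have "adj E = {}" using True unfolding adj_def by simp
      ultimately show ?thesis by simp
    qed
    then have "V = {r}" using r by blast
    then show ?thesis using True tree_ind.single by simp
  next
    case False
    then obtain e where e: "e \<in> E" by blast
    then obtain u v where uv: "e = {u, v}" "u \<noteq> v" "u \<in> V" "v \<in> V" using edges_ok_pair[OF ok] by blast
    let ?R = "adj (E - {e})"
    define V1 where "V1 = {x \<in> V. (u, x) \<in> ?R\<^sup>*}"
    define V2 where "V2 = {x \<in> V. (v, x) \<in> ?R\<^sup>*}"
    define E1 where "E1 = {f \<in> E - {e}. f \<subseteq> V1}"
    define E2 where "E2 = {f \<in> E - {e}. f \<subseteq> V2}"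
    have t1: "is_tree V1 E1" unfolding V1_def E1_def using comp_tree[OF t uv(3) e] .
    have t2: "is_tree V2 E2" unfolding V2_def E2_def using comp_tree[OF t uv(4) e] .
    have "E1 \<subseteq> E - {e}" unfolding E1_def by blast
    then have "card E1 \<le> card (E - {e})" using finE by (simp add: card_mono)
    then have c1: "card E1 < card E" using card_Diff1_less[OF finE e] by linarith
    have "E2 \<subseteq> E - {e}" unfolding E2_def by blast
    then have "card E2 \<le> card (E - {e})" using finE by (simp add: card_mono)
    then have c2: "card E2 < card E" using card_Diff1_less[OF finE e] by linarith
    have ti1: "tree_ind V1 E1" using less.hyps[OF c1 t1] .
    have ti2: "tree_ind V2 E2" using less.hyps[OF c2 t2] .
    have "acyclic_graph E" using t unfolding is_tree_def by simp
    then have "{u, v} \<in> E \<longrightarrow> (u, v) \<notin> (adj (E - {{u, v}}))\<^sup>*" unfolding acyclic_graph_def by blast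
    then have nuv: "(u, v) \<notin> ?R\<^sup>*" using e uv(1) by simp
    have dj: "V1 \<inter> V2 = {}"
    proof (rule ccontr)
      assume "V1 \<inter> V2 \<noteq> {}"
      then obtain w where "(u, w) \<in> ?R\<^sup>*" "(v, w) \<in> ?R\<^sup>*" unfolding V1_def V2_def by blast
      then have "(u, v) \<in> ?R\<^sup>*" using rt_sym by (meson rtrancl_trans)
      then show False using nuv by blast
    qed
    have u1: "u \<in> V1" unfolding V1_def using uv by simp
    have v2: "v \<in> V2" unfolding V2_def using uv by simp
    have reach: "(u, w) \<in> ?R\<^sup>* \<or> (v, w) \<in> ?R\<^sup>*" if "(u, w) \<in> (adj E)\<^sup>*" for w
      using that
    proof (induction rule: rtrancl_induct)
      case base
      then show ?case by simp
    next
      case (step w y)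
      have f: "{w, y} \<in> E" using step.hyps(2) by (simp add: adj_iff)
      show ?case
      proof (cases "{w, y} = e")
        case True
        then have "y = u \<or> y = v" using uv(1) by (auto simp add: doubleton_eq_iff)
        then show ?thesis by auto
      next
        case False
        then have "(w, y) \<in> ?R" using f by (simp add: adj_iff)
        then show ?thesis using step.IH by (meson rtrancl.rtrancl_into_rtrancl)
      qed
    qed
    have VV: "V = V1 \<union> V2"
    proof
      show "V \<subseteq> V1 \<union> V2"
      proof
        fix w assume w: "w \<in> V"
        have "(u, w) \<in> (adj E)\<^sup>*" using t uv(3) w unfolding is_tree_def connected_graph_def by blast
        then show "w \<in> V1 \<union> V2" using reach w unfolding V1_def V2_def by blast
      qed
      show "V1 \<union> V2 \<subseteq> V" unfolding V1_def V2_def by blast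
    qed
    have EE: "E = insert {u, v} (E1 \<union> E2)"
    proof
      show "insert {u, v} (E1 \<union> E2) \<subseteq> E" using e uv(1) unfolding E1_def E2_def by blast
      show "E \<subseteq> insert {u, v} (E1 \<union> E2)"
      proof
        fix f assume f: "f \<in> E"
        show "f \<in> insert {u, v} (E1 \<union> E2)"
        proof (cases "f = e")
          case True then show ?thesis using uv(1) by simp
        next
          case False
          obtain a b where ab: "f = {a, b}" "a \<in> V" "b \<in> V" using edges_ok_pair[OF ok f] by blast
          have fE: "{a, b} \<in> E - {e}" using f False ab(1) by simp
          have Rab: "(a, b) \<in> ?R" using fE by (simp add: adj_iff)
          have "{b, a} \<in> E - {e}" using fE by (simp add: insert_commute)
          then have Rba: "(b, a) \<in> ?R" by (simp add: adj_iff)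
          have "a \<in> V1 \<or> a \<in> V2" using VV ab(2) by blast
          then show ?thesis
          proof
            assume "a \<in> V1"
            then have "(u, a) \<in> ?R\<^sup>*" unfolding V1_def by simp
            then have "(u, b) \<in> ?R\<^sup>*" using Rab by (rule rtrancl_into_rtrancl)
            then have "b \<in> V1" using ab(3) unfolding V1_def by simp
            then have "f \<in> E1" using \<open>a \<in> V1\<close> f False ab(1) unfolding E1_def by simp
            then show ?thesis by simp
          next
            assume "a \<in> V2"
            then have "(v, a) \<in> ?R\<^sup>*" unfolding V2_def by simp
            then have "(v, b) \<in> ?R\<^sup>*" using Rab by (rule rtrancl_into_rtrancl)
            then have "b \<in> V2" using ab(3) unfolding V2_def by simp
            then have "f \<in> E2" using \<open>a \<in> V2\<close> f False ab(1) unfolding E2_def by simp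
            then show ?thesis by simp
          qed
        qed
      qed
    qed
    show ?thesis unfolding VV EE using tree_ind.join[OF ti1 ti2 dj u1 v2] .
  qed
qed

lemma tree_iff: "is_tree V E \<longleftrightarrow> tree_ind V E"
  using is_tree_tree_ind tree_ind_is_tree by blast



definition fac :: "(nat set \<Rightarrow> real) \<Rightarrow> nat set \<Rightarrow> (nat \<Rightarrow> real) \<Rightarrow> real" where
  "fac \<theta> e x = (1 + \<theta> e * (\<Prod>v\<in>e. x v)) / 2"

definition W :: "nat set set \<Rightarrow> (nat set \<Rightarrow> real) \<Rightarrow> (nat \<Rightarrow> real) \<Rightarrow> real" where
  "W E \<theta> x = (\<Prod>e\<in>E. fac \<theta> e x)"

definition merge :: "nat set \<Rightarrow> (nat \<Rightarrow> real) \<Rightarrow> (nat \<Rightarrow> real) \<Rightarrow> nat \<Rightarrow> real" where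
  "merge A x1 x2 = (\<lambda>i. if i \<in> A then x1 i else x2 i)"

lemma weight_W: "weight (V, E, \<theta>) x = W E \<theta> x"
  unfolding weight_def W_def fac_def by simp

lemma finite_spins: "finite V \<Longrightarrow> finite (spins V)"
  unfolding spins_def by (intro finite_PiE) auto

lemma spins_val: "x \<in> spins V \<Longrightarrow> v \<in> V \<Longrightarrow> x v = 1 \<or> x v = -1"
  unfolding spins_def by (auto simp: PiE_iff)

lemma spins_out: "x \<in> spins V \<Longrightarrow> v \<notin> V \<Longrightarrow> x v = undefined"
  unfolding spins_def by (auto simp: PiE_iff extensional_def)

lemma merge_bij:
  assumes "A \<inter> B = {}"
  shows "bij_betw (\<lambda>(x1, x2). merge A x1 x2) (spins A \<times> spins B) (spins (A \<union> B))"
proof (rule bij_betwI[where g = "\<lambda>x. (restrict x A, restrict x B)"])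
  show "(\<lambda>(x1, x2). merge A x1 x2) \<in> spins A \<times> spins B \<rightarrow> spins (A \<union> B)"
    unfolding spins_def merge_def by (fastforce simp: PiE_iff extensional_def)
  show "(\<lambda>x. (restrict x A, restrict x B)) \<in> spins (A \<union> B) \<rightarrow> spins A \<times> spins B"
    unfolding spins_def by (auto simp: PiE_iff)
  show "(\<lambda>x. (restrict x A, restrict x B)) ((\<lambda>(x1, x2). merge A x1 x2) p) = p"
    if hp: "p \<in> spins A \<times> spins B" for p
  proof -
    obtain x1 x2 where p: "p = (x1, x2)" "x1 \<in> spins A" "x2 \<in> spins B" using hp by blast
    have "restrict (merge A x1 x2) A = x1"
      using p(2) unfolding spins_def merge_def by (auto simp: PiE_iff extensional_def fun_eq_iff)
    moreover have "restrict (merge A x1 x2) B = x2"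
      using p(3) assms unfolding spins_def merge_def by (auto simp: PiE_iff extensional_def fun_eq_iff)
    ultimately show ?thesis using p by simp
  qed
  show "(\<lambda>(x1, x2). merge A x1 x2) ((\<lambda>x. (restrict x A, restrict x B)) x) = x"
    if "x \<in> spins (A \<union> B)" for x
    using that unfolding spins_def merge_def by (auto simp: PiE_iff extensional_def fun_eq_iff)
qed

lemma sum_spins_Un:
  assumes "A \<inter> B = {}" "finite A" "finite B"
  shows "(\<Sum>x\<in>spins (A \<union> B). F x) = (\<Sum>x1\<in>spins A. \<Sum>x2\<in>spins B. F (merge A x1 x2))"
proof -
  have "(\<Sum>x1\<in>spins A. \<Sum>x2\<in>spins B. F (merge A x1 x2)) = (\<Sum>(x1, x2)\<in>spins A \<times> spins B. F (merge A x1 x2))"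
    by (rule sum.cartesian_product)
  also have "\<dots> = (\<Sum>p\<in>spins A \<times> spins B. F ((\<lambda>(x1, x2). merge A x1 x2) p))"
    by (simp add: case_prod_beta)
  also have "\<dots> = (\<Sum>x\<in>spins (A \<union> B). F x)"
    by (rule sum.reindex_bij_betw[OF merge_bij[OF assms(1)]])
  finally show ?thesis by simp
qed

lemma sum_by_val:
  assumes "finite V" "v \<in> V"
  shows "(\<Sum>x\<in>spins V. H (x v) x) =
    (\<Sum>x\<in>spins V. if x v = 1 then H 1 x else 0) + (\<Sum>x\<in>spins V. if x v = -1 then H (-1) x else 0)"
proof -
  have "H (x v) x = (if x v = 1 then H 1 x else 0) + (if x v = -1 then H (-1) x else 0)"
    if "x \<in> spins V" for x
    using spins_val[OF that assms(2)] by auto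
  then have "(\<Sum>x\<in>spins V. H (x v) x) =
    (\<Sum>x\<in>spins V. (if x v = 1 then H 1 x else 0) + (if x v = -1 then H (-1) x else 0))"
    by (rule sum.cong[OF refl])
  then show ?thesis by (simp add: sum.distrib)
qed

lemma prod_spins_abs:
  assumes "x \<in> spins V" "e \<subseteq> V"
  shows "\<bar>\<Prod>v\<in>e. x v\<bar> = 1"
proof -
  have "\<bar>\<Prod>v\<in>e. x v\<bar> = (\<Prod>v\<in>e. \<bar>x v\<bar>)" by (simp add: abs_prod)
  also have "\<dots> = (\<Prod>v\<in>e. 1)"
  proof (intro prod.cong refl)
    fix w assume "w \<in> e"
    then have "w \<in> V" using assms(2) by blast
    then have "x w = 1 \<or> x w = -1" using spins_val[OF assms(1)] by blast
    then show "\<bar>x w\<bar> = 1" by auto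
  qed
  finally show ?thesis by simp
qed

lemma fac_nonneg:
  assumes "x \<in> spins V" "e \<subseteq> V" "\<bar>\<theta> e\<bar> \<le> 1"
  shows "0 \<le> fac \<theta> e x"
proof -
  have "\<bar>\<theta> e * (\<Prod>v\<in>e. x v)\<bar> \<le> 1" using prod_spins_abs[OF assms(1,2)] assms(3) by (simp add: abs_mult)
  then have "-1 \<le> \<theta> e * (\<Prod>v\<in>e. x v)" by (simp add: abs_le_iff)
  then show ?thesis unfolding fac_def by simp
qed

lemma W_nonneg:
  assumes "x \<in> spins V" "edges_ok V E" "\<forall>e\<in>E. \<bar>\<theta> e\<bar> \<le> 1"
  shows "0 \<le> W E \<theta> x"
  unfolding W_def
proof (rule prod_nonneg)
  fix e assume "e \<in> E"
  then show "0 \<le> fac \<theta> e x" using fac_nonneg[OF assms(1) edges_ok_sub[OF assms(2)]] assms(3) by blast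
qed

lemma fac_merge1: "e \<subseteq> A \<Longrightarrow> fac \<theta> e (merge A x1 x2) = fac \<theta> e x1"
proof -
  assume "e \<subseteq> A"
  then have "(\<Prod>v\<in>e. merge A x1 x2 v) = (\<Prod>v\<in>e. x1 v)" unfolding merge_def
    by (intro prod.cong) auto
  then show ?thesis unfolding fac_def by simp
qed

lemma fac_merge2: "e \<subseteq> B \<Longrightarrow> A \<inter> B = {} \<Longrightarrow> fac \<theta> e (merge A x1 x2) = fac \<theta> e x2"
proof -
  assume "e \<subseteq> B" "A \<inter> B = {}"
  then have "(\<Prod>v\<in>e. merge A x1 x2 v) = (\<Prod>v\<in>e. x2 v)" unfolding merge_def
    by (intro prod.cong) auto
  then show ?thesis unfolding fac_def by simp
qed

lemma fac_merge_edge: "u \<in> A \<Longrightarrow> v \<notin> A \<Longrightarrow>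
   fac \<theta> {u, v} (merge A x1 x2) = (1 + \<theta> {u, v} * (x1 u * x2 v)) / 2"
  unfolding fac_def merge_def by (cases "u = v") auto

lemma W_join:
  assumes t1: "tree_ind V1 E1" and t2: "tree_ind V2 E2" and dj: "V1 \<inter> V2 = {}"
    and u: "u \<in> V1" and v: "v \<in> V2"
  shows "W (insert {u, v} (E1 \<union> E2)) \<theta> (merge V1 x1 x2) =
     (1 + \<theta> {u, v} * (x1 u * x2 v)) / 2 * (W E1 \<theta> x1 * W E2 \<theta> x2)"
proof -
  have b1: "finite E1" "edges_ok V1 E1" using tree_ind_basic[OF t1] by auto
  have b2: "finite E2" "edges_ok V2 E2" using tree_ind_basic[OF t2] by auto
  have s1: "e \<subseteq> V1 \<and> e \<noteq> {}" if "e \<in> E1" for e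
    using b1(2) that unfolding edges_ok_def by fastforce
  have s2: "e \<subseteq> V2 \<and> e \<noteq> {}" if "e \<in> E2" for e
    using b2(2) that unfolding edges_ok_def by fastforce
  have d: "E1 \<inter> E2 = {}"
  proof (rule ccontr)
    assume "E1 \<inter> E2 \<noteq> {}"
    then obtain e where "e \<in> E1" "e \<in> E2" by blast
    then have "e \<subseteq> V1" "e \<subseteq> V2" "e \<noteq> {}" using s1 s2 by auto
    then show False using dj by blast
  qed
  have n: "{u, v} \<notin> E1 \<union> E2"
  proof
    assume "{u, v} \<in> E1 \<union> E2"
    then have "{u,v} \<subseteq> V1 \<or> {u,v} \<subseteq> V2" using s1 s2 by blast
    then show False using dj u v by blast
  qed
  have vn: "v \<notin> V1" using dj v by blast
  have "W (insert {u, v} (E1 \<union> E2)) \<theta> (merge V1 x1 x2) =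
     fac \<theta> {u, v} (merge V1 x1 x2) * ((\<Prod>e\<in>E1. fac \<theta> e (merge V1 x1 x2)) * (\<Prod>e\<in>E2. fac \<theta> e (merge V1 x1 x2)))"
    unfolding W_def using b1(1) b2(1) n d by (simp add: prod.union_disjoint)
  also have "(\<Prod>e\<in>E1. fac \<theta> e (merge V1 x1 x2)) = W E1 \<theta> x1"
    unfolding W_def using s1 fac_merge1 by (intro prod.cong) auto
  also have "(\<Prod>e\<in>E2. fac \<theta> e (merge V1 x1 x2)) = W E2 \<theta> x2"
    unfolding W_def using s2 fac_merge2[OF _ dj] by (intro prod.cong) auto
  also have "fac \<theta> {u, v} (merge V1 x1 x2) = (1 + \<theta> {u, v} * (x1 u * x2 v)) / 2"
    using fac_merge_edge[OF u vn] .
  finally show ?thesis .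
qed



lemma sum_if_const: "(\<Sum>x\<in>S. if P x then (k::real) * G x else 0) = k * (\<Sum>x\<in>S. if P x then G x else 0)"
proof -
  have "(\<Sum>x\<in>S. if P x then k * G x else 0) = (\<Sum>x\<in>S. k * (if P x then G x else 0))"
    by (intro sum.cong) auto
  then show ?thesis by (simp add: sum_distrib_left)
qed

lemma inner_avg:
  fixes c :: real and G :: "(nat \<Rightarrow> real) \<Rightarrow> real"
  assumes "finite V" "v \<in> V"
  shows "(\<Sum>x\<in>spins V. (1 + c * x v) / 2 * G x) =
    (1 + c) / 2 * (\<Sum>x\<in>spins V. if x v = 1 then G x else 0) +
    (1 - c) / 2 * (\<Sum>x\<in>spins V. if x v = -1 then G x else 0)"
proof -
  have "(\<Sum>x\<in>spins V. (1 + c * x v) / 2 * G x) =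
    (\<Sum>x\<in>spins V. if x v = 1 then (1 + c * 1) / 2 * G x else 0) +
    (\<Sum>x\<in>spins V. if x v = -1 then (1 + c * (-1)) / 2 * G x else 0)"
    using sum_by_val[OF assms, of "\<lambda>t x. (1 + c * t) / 2 * G x"] by simp
  also have "\<dots> = (\<Sum>x\<in>spins V. if x v = 1 then (1 + c) / 2 * G x else 0) +
    (\<Sum>x\<in>spins V. if x v = -1 then (1 - c) / 2 * G x else 0)"
  proof -
    have e1: "(1 + c * 1) / 2 = (1 + c) / 2" by simp
    have e2: "(1 + c * (-1)) / 2 = (1 - c) / 2" by simp
    show ?thesis by (simp only: e1 e2)
  qed
  also have "\<dots> = (1 + c) / 2 * (\<Sum>x\<in>spins V. if x v = 1 then G x else 0) +
    (1 - c) / 2 * (\<Sum>x\<in>spins V. if x v = -1 then G x else 0)"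
    by (simp only: sum_if_const)
  finally show ?thesis .
qed

lemma sum_single:
  assumes "s = 1 \<or> s = -1"
  shows "(\<Sum>x\<in>spins {r}. if x r = s then (1::real) else 0) = 1"
proof -
  have "{x \<in> spins {r}. x r = s} = {\<lambda>i. if i = r then s else undefined}"
    using assms unfolding spins_def by (auto simp: PiE_iff extensional_def fun_eq_iff)
  moreover have "(\<Sum>x\<in>spins {r}. if x r = s then (1::real) else 0) = card {x \<in> spins {r}. x r = s}"
    using finite_spins[of "{r}"] by (simp add: sum.If_cases Int_def)
  ultimately show ?thesis by simp
qed

lemma sum_if_out: "(\<Sum>x\<in>S. if P then f x else 0) = (if P then (\<Sum>x\<in>S. f x) else 0)"
  by (cases P) auto

lemma sum_merge_left:
  assumes dj: "V1 \<inter> V2 = {}" and f1: "finite V1" and f2: "finite V2" and r: "r \<in> V1"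
  shows "(\<Sum>x\<in>spins (V1 \<union> V2). if x r = s then F x else 0) =
    (\<Sum>x1\<in>spins V1. if x1 r = s then (\<Sum>x2\<in>spins V2. F (merge V1 x1 x2)) else 0)"
proof -
  have "(\<Sum>x\<in>spins (V1 \<union> V2). if x r = s then F x else 0) =
     (\<Sum>x1\<in>spins V1. \<Sum>x2\<in>spins V2. if merge V1 x1 x2 r = s then F (merge V1 x1 x2) else 0)"
    by (rule sum_spins_Un[OF dj f1 f2])
  also have "\<dots> = (\<Sum>x1\<in>spins V1. if x1 r = s then (\<Sum>x2\<in>spins V2. F (merge V1 x1 x2)) else 0)"
    using r unfolding merge_def by (simp add: sum_if_out)
  finally show ?thesis .
qed

lemma W_sum_join_left:
  assumes t1: "tree_ind V1 E1" and t2: "tree_ind V2 E2" and dj: "V1 \<inter> V2 = {}"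
    and u: "u \<in> V1" and v: "v \<in> V2"
    and IH1: "\<And>r s. r \<in> V1 \<Longrightarrow> s = 1 \<or> s = -1 \<Longrightarrow> (\<Sum>x\<in>spins V1. if x r = s then W E1 \<theta> x else 0) = 1"
    and IH2: "\<And>r s. r \<in> V2 \<Longrightarrow> s = 1 \<or> s = -1 \<Longrightarrow> (\<Sum>x\<in>spins V2. if x r = s then W E2 \<theta> x else 0) = 1"
    and r: "r \<in> V1" and s: "s = 1 \<or> s = -1"
  shows "(\<Sum>x\<in>spins (V1 \<union> V2). if x r = s then W (insert {u, v} (E1 \<union> E2)) \<theta> x else 0) = 1"
proof -
  have f1: "finite V1" using tree_ind_basic[OF t1] by simp
  have f2: "finite V2" using tree_ind_basic[OF t2] by simp
  have inner: "(\<Sum>x2\<in>spins V2. W (insert {u, v} (E1 \<union> E2)) \<theta> (merge V1 x1 x2)) = W E1 \<theta> x1" for x1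
  proof -
    have "(\<Sum>x2\<in>spins V2. W (insert {u, v} (E1 \<union> E2)) \<theta> (merge V1 x1 x2)) =
      (\<Sum>x2\<in>spins V2. (1 + (\<theta> {u, v} * x1 u) * x2 v) / 2 * (W E1 \<theta> x1 * W E2 \<theta> x2))"
      by (rule sum.cong[OF refl], subst W_join[OF t1 t2 dj u v], simp add: mult.assoc)
    also have "\<dots> = (\<Sum>x2\<in>spins V2. ((1 + (\<theta> {u, v} * x1 u) * x2 v) / 2 * W E2 \<theta> x2) * W E1 \<theta> x1)"
      by (intro sum.cong refl) (simp add: mult_ac)
    also have "\<dots> = (\<Sum>x2\<in>spins V2. (1 + (\<theta> {u, v} * x1 u) * x2 v) / 2 * W E2 \<theta> x2) * W E1 \<theta> x1"
      by (rule sum_distrib_right[symmetric])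
    also have "(\<Sum>x2\<in>spins V2. (1 + (\<theta> {u, v} * x1 u) * x2 v) / 2 * W E2 \<theta> x2) = 1"
      using inner_avg[OF f2 v, of "\<theta> {u, v} * x1 u" "W E2 \<theta>"] IH2[OF v] by (simp add: field_simps)
    finally show ?thesis by simp
  qed
  have "(\<Sum>x\<in>spins (V1 \<union> V2). if x r = s then W (insert {u, v} (E1 \<union> E2)) \<theta> x else 0) =
    (\<Sum>x1\<in>spins V1. if x1 r = s then (\<Sum>x2\<in>spins V2. W (insert {u, v} (E1 \<union> E2)) \<theta> (merge V1 x1 x2)) else 0)"
    by (rule sum_merge_left[OF dj f1 f2 r])
  also have "\<dots> = (\<Sum>x1\<in>spins V1. if x1 r = s then W E1 \<theta> x1 else 0)"
    unfolding inner by (rule refl)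
  also have "\<dots> = 1" using IH1[OF r s] .
  finally show ?thesis .
qed

lemma join_swap:
  "V1 \<union> V2 = V2 \<union> V1" "insert {u, v} (E1 \<union> E2) = insert {v, u} (E2 \<union> E1)"
  by (auto simp: insert_commute)

lemma W_sum:
  assumes "tree_ind V E"
  shows "r \<in> V \<Longrightarrow> s = 1 \<or> s = -1 \<Longrightarrow> (\<Sum>x\<in>spins V. if x r = s then W E \<theta> x else 0) = 1"
  using assms
proof (induction arbitrary: r s rule: tree_ind.induct)
  case (single r0)
  then have "r = r0" by simp
  then show ?case using sum_single[OF single(2), of r0] unfolding W_def prod.empty by simp
next
  case (join V1 E1 V2 E2 u v)
  show ?case
  proof (cases "r \<in> V1")
    case True
    show ?thesis using W_sum_join_left[OF join.hyps join.IH True join.prems(2)] .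
  next
    case False
    then have r2: "r \<in> V2" using join.prems(1) by blast
    have dj': "V2 \<inter> V1 = {}" using join.hyps(3) by blast
    show ?thesis unfolding join_swap(1)[of V1 V2] join_swap(2)[of u v E1 E2]
      using W_sum_join_left[OF join.hyps(2,1) dj' join.hyps(5,4) join.IH(2,1) r2 join.prems(2)] .
  qed
qed

lemma W_total:
  assumes "tree_ind V E"
  shows "(\<Sum>x\<in>spins V. W E \<theta> x) = 2"
proof -
  have "V \<noteq> {}" using tree_ind_basic[OF assms] by simp
  then obtain r where r: "r \<in> V" by blast
  have f: "finite V" using tree_ind_basic[OF assms] by simp
  have "(\<Sum>x\<in>spins V. W E \<theta> x) = (\<Sum>x\<in>spins V. if x r = 1 then W E \<theta> x else 0) +
     (\<Sum>x\<in>spins V. if x r = -1 then W E \<theta> x else 0)"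
    using sum_by_val[OF f r, of "\<lambda>t x. W E \<theta> x"] by simp
  moreover have "(\<Sum>x\<in>spins V. if x r = 1 then W E \<theta> x else 0) = 1" using W_sum[OF assms r] by simp
  moreover have "(\<Sum>x\<in>spins V. if x r = -1 then W E \<theta> x else 0) = 1" using W_sum[OF assms r] by simp
  ultimately show ?thesis by simp
qed



lemma join_facts:
  assumes t1: "tree_ind V1 E1" and t2: "tree_ind V2 E2" and dj: "V1 \<inter> V2 = {}"
    and u: "u \<in> V1" and v: "v \<in> V2"
  shows "finite E1" "finite E2" "E1 \<inter> E2 = {}" "{u, v} \<notin> E1 \<union> E2"
proof -
  have b1: "finite E1" "edges_ok V1 E1" using tree_ind_basic[OF t1] by auto
  have b2: "finite E2" "edges_ok V2 E2" using tree_ind_basic[OF t2] by auto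
  show "finite E1" "finite E2" using b1 b2 by auto
  have s1: "e \<subseteq> V1 \<and> e \<noteq> {}" if "e \<in> E1" for e
    using b1(2) that unfolding edges_ok_def by fastforce
  have s2: "e \<subseteq> V2 \<and> e \<noteq> {}" if "e \<in> E2" for e
    using b2(2) that unfolding edges_ok_def by fastforce
  show "E1 \<inter> E2 = {}"
  proof (rule ccontr)
    assume "E1 \<inter> E2 \<noteq> {}"
    then obtain e where "e \<in> E1" "e \<in> E2" by blast
    then have "e \<subseteq> V1" "e \<subseteq> V2" "e \<noteq> {}" using s1 s2 by auto
    then show False using dj by blast
  qed
  show "{u, v} \<notin> E1 \<union> E2"
  proof
    assume "{u, v} \<in> E1 \<union> E2"
    then have "{u,v} \<subseteq> V1 \<or> {u,v} \<subseteq> V2" using s1 s2 by blast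
    then show False using dj u v by blast
  qed
qed

lemma sum_if_add:
  "(\<Sum>x\<in>S. if P x then (f x + g x :: real) else 0) =
   (\<Sum>x\<in>S. if P x then f x else 0) + (\<Sum>x\<in>S. if P x then g x else 0)"
proof -
  have "(\<Sum>x\<in>S. if P x then (f x + g x :: real) else 0) =
    (\<Sum>x\<in>S. (if P x then f x else 0) + (if P x then g x else 0))"
    by (intro sum.cong) auto
  then show ?thesis by (simp add: sum.distrib)
qed

lemma sum_if_mono:
  assumes "\<And>x. x \<in> S \<Longrightarrow> P x \<Longrightarrow> f x \<le> (g x :: real)"
  shows "(\<Sum>x\<in>S. if P x then f x else 0) \<le> (\<Sum>x\<in>S. if P x then g x else 0)"
  by (rule sum_mono) (use assms in auto)

lemma pt_bound:
  fixes a b X1 X2 Y1 Y2 :: real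
  assumes "0 \<le> a" "0 \<le> Y1" "0 \<le> Y2" "0 \<le> X2"
  shows "\<bar>a * (X1 * X2) - b * (Y1 * Y2)\<bar> \<le>
    \<bar>a - b\<bar> * Y1 * Y2 + \<bar>X1 - Y1\<bar> * (a * X2) + Y1 * (a * \<bar>X2 - Y2\<bar>)"
proof -
  have eq: "a * (X1 * X2) - b * (Y1 * Y2) = (a - b) * Y1 * Y2 + (X1 - Y1) * (a * X2) + Y1 * (a * (X2 - Y2))"
    by (simp add: algebra_simps)
  have "\<bar>(a - b) * Y1 * Y2 + (X1 - Y1) * (a * X2) + Y1 * (a * (X2 - Y2))\<bar> \<le>
     \<bar>(a - b) * Y1 * Y2\<bar> + \<bar>(X1 - Y1) * (a * X2)\<bar> + \<bar>Y1 * (a * (X2 - Y2))\<bar>"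
    by (meson abs_triangle_ineq add_mono order_trans order_refl)
  also have "\<dots> = \<bar>a - b\<bar> * Y1 * Y2 + \<bar>X1 - Y1\<bar> * (a * X2) + Y1 * (a * \<bar>X2 - Y2\<bar>)"
    using assms by (simp add: abs_mult)
  finally show ?thesis unfolding eq .
qed

lemma avg_le:
  fixes c D1 D2 B :: real
  assumes "\<bar>c\<bar> \<le> 1" "D1 \<le> B" "D2 \<le> B"
  shows "(1 + c) / 2 * D1 + (1 - c) / 2 * D2 \<le> B"
proof -
  have "0 \<le> (1 + c) / 2" "0 \<le> (1 - c) / 2" using assms(1) by (auto simp: abs_le_iff)
  then have "(1 + c) / 2 * D1 + (1 - c) / 2 * D2 \<le> (1 + c) / 2 * B + (1 - c) / 2 * B"
    using assms by (meson add_mono mult_left_mono)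
  also have "\<dots> = B" by (simp add: field_simps)
  finally show ?thesis .
qed



lemma D_join_left:
  fixes \<theta> \<theta>' :: "nat set \<Rightarrow> real"
  assumes t1: "tree_ind V1 E1" and t2: "tree_ind V2 E2" and dj: "V1 \<inter> V2 = {}"
    and u: "u \<in> V1" and v: "v \<in> V2"
    and bd: "\<forall>e\<in>insert {u, v} (E1 \<union> E2). \<bar>\<theta> e\<bar> \<le> 1"
    and bd': "\<forall>e\<in>insert {u, v} (E1 \<union> E2). \<bar>\<theta>' e\<bar> \<le> 1"
    and IH1: "\<And>r s. r \<in> V1 \<Longrightarrow> s = 1 \<or> s = -1 \<Longrightarrow>
       (\<Sum>x\<in>spins V1. if x r = s then \<bar>W E1 \<theta> x - W E1 \<theta>' x\<bar> else 0) \<le> (\<Sum>e\<in>E1. \<bar>\<theta> e - \<theta>' e\<bar>)"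
    and IH2: "\<And>r s. r \<in> V2 \<Longrightarrow> s = 1 \<or> s = -1 \<Longrightarrow>
       (\<Sum>x\<in>spins V2. if x r = s then \<bar>W E2 \<theta> x - W E2 \<theta>' x\<bar> else 0) \<le> (\<Sum>e\<in>E2. \<bar>\<theta> e - \<theta>' e\<bar>)"
    and r: "r \<in> V1" and s: "s = 1 \<or> s = -1"
  shows "(\<Sum>x\<in>spins (V1 \<union> V2). if x r = s then
           \<bar>W (insert {u, v} (E1 \<union> E2)) \<theta> x - W (insert {u, v} (E1 \<union> E2)) \<theta>' x\<bar> else 0)
         \<le> (\<Sum>e\<in>insert {u, v} (E1 \<union> E2). \<bar>\<theta> e - \<theta>' e\<bar>)"
proof -
  let ?E = "insert {u, v} (E1 \<union> E2)"
  define c where "c = \<theta> {u, v}"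
  define c' where "c' = \<theta>' {u, v}"
  define B1 where "B1 = (\<Sum>e\<in>E1. \<bar>\<theta> e - \<theta>' e\<bar>)"
  define B2 where "B2 = (\<Sum>e\<in>E2. \<bar>\<theta> e - \<theta>' e\<bar>)"
  have f1: "finite V1" "edges_ok V1 E1" using tree_ind_basic[OF t1] by auto
  have f2: "finite V2" "edges_ok V2 E2" using tree_ind_basic[OF t2] by auto
  have jf: "finite E1" "finite E2" "E1 \<inter> E2 = {}" "{u, v} \<notin> E1 \<union> E2"
    using join_facts[OF t1 t2 dj u v] by auto
  have bd1: "\<forall>e\<in>E1. \<bar>\<theta> e\<bar> \<le> 1" "\<forall>e\<in>E1. \<bar>\<theta>' e\<bar> \<le> 1" using bd bd' by auto
  have bd2: "\<forall>e\<in>E2. \<bar>\<theta> e\<bar> \<le> 1" "\<forall>e\<in>E2. \<bar>\<theta>' e\<bar> \<le> 1" using bd bd' by auto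
  have cb: "\<bar>c\<bar> \<le> 1" using bd unfolding c_def by simp
  have sumE: "(\<Sum>e\<in>?E. \<bar>\<theta> e - \<theta>' e\<bar>) = \<bar>c - c'\<bar> + B1 + B2"
    unfolding c_def c'_def B1_def B2_def using jf by (simp add: sum.union_disjoint)
  have pm1: "x1 u = 1 \<or> x1 u = -1" if "x1 \<in> spins V1" for x1 using spins_val[OF that u] .
  have pm2: "x2 v = 1 \<or> x2 v = -1" if "x2 \<in> spins V2" for x2 using spins_val[OF that v] .
  have pt: "\<bar>W ?E \<theta> (merge V1 x1 x2) - W ?E \<theta>' (merge V1 x1 x2)\<bar> \<le>
      \<bar>c - c'\<bar> / 2 * W E1 \<theta>' x1 * W E2 \<theta>' x2
      + \<bar>W E1 \<theta> x1 - W E1 \<theta>' x1\<bar> * ((1 + (c * x1 u) * x2 v) / 2 * W E2 \<theta> x2)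
      + W E1 \<theta>' x1 * ((1 + (c * x1 u) * x2 v) / 2 * \<bar>W E2 \<theta> x2 - W E2 \<theta>' x2\<bar>)"
    if x1: "x1 \<in> spins V1" and x2: "x2 \<in> spins V2" for x1 x2
  proof -
    have pp: "x1 u * x2 v = 1 \<or> x1 u * x2 v = -1" using pm1[OF x1] pm2[OF x2] by auto
    have a0: "0 \<le> (1 + c * (x1 u * x2 v)) / 2" using pp cb by (auto simp: abs_le_iff)
    have ab: "\<bar>(1 + c * (x1 u * x2 v)) / 2 - (1 + c' * (x1 u * x2 v)) / 2\<bar> = \<bar>c - c'\<bar> / 2"
    proof -
      have e: "(1 + c * (x1 u * x2 v)) / 2 - (1 + c' * (x1 u * x2 v)) / 2 = (c - c') * (x1 u * x2 v) / 2"
        by (simp add: field_simps)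
      have "\<bar>x1 u * x2 v\<bar> = 1" using pp by auto
      then show ?thesis unfolding e abs_divide abs_mult by simp
    qed
    have Y1: "0 \<le> W E1 \<theta>' x1" using W_nonneg[OF x1 f1(2) bd1(2)] .
    have Y2: "0 \<le> W E2 \<theta>' x2" using W_nonneg[OF x2 f2(2) bd2(2)] .
    have X2: "0 \<le> W E2 \<theta> x2" using W_nonneg[OF x2 f2(2) bd2(1)] .
    have "\<bar>W ?E \<theta> (merge V1 x1 x2) - W ?E \<theta>' (merge V1 x1 x2)\<bar> =
      \<bar>(1 + c * (x1 u * x2 v)) / 2 * (W E1 \<theta> x1 * W E2 \<theta> x2) -
       (1 + c' * (x1 u * x2 v)) / 2 * (W E1 \<theta>' x1 * W E2 \<theta>' x2)\<bar>"
      unfolding c_def c'_def W_join[OF t1 t2 dj u v] ..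
    also have "\<dots> \<le> \<bar>(1 + c * (x1 u * x2 v)) / 2 - (1 + c' * (x1 u * x2 v)) / 2\<bar> * W E1 \<theta>' x1 * W E2 \<theta>' x2
      + \<bar>W E1 \<theta> x1 - W E1 \<theta>' x1\<bar> * ((1 + c * (x1 u * x2 v)) / 2 * W E2 \<theta> x2)
      + W E1 \<theta>' x1 * ((1 + c * (x1 u * x2 v)) / 2 * \<bar>W E2 \<theta> x2 - W E2 \<theta>' x2\<bar>)"
      by (rule pt_bound[OF a0 Y1 Y2 X2])
    also have "\<dots> = \<bar>c - c'\<bar> / 2 * W E1 \<theta>' x1 * W E2 \<theta>' x2
      + \<bar>W E1 \<theta> x1 - W E1 \<theta>' x1\<bar> * ((1 + (c * x1 u) * x2 v) / 2 * W E2 \<theta> x2)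
      + W E1 \<theta>' x1 * ((1 + (c * x1 u) * x2 v) / 2 * \<bar>W E2 \<theta> x2 - W E2 \<theta>' x2\<bar>)"
      unfolding ab by (simp add: mult.assoc)
    finally show ?thesis .
  qed
  have inner: "(\<Sum>x2\<in>spins V2. \<bar>W ?E \<theta> (merge V1 x1 x2) - W ?E \<theta>' (merge V1 x1 x2)\<bar>) \<le>
     \<bar>c - c'\<bar> * W E1 \<theta>' x1 + \<bar>W E1 \<theta> x1 - W E1 \<theta>' x1\<bar> + W E1 \<theta>' x1 * B2"
    if x1: "x1 \<in> spins V1" for x1
  proof -
    define k where "k = c * x1 u"
    have kb: "\<bar>k\<bar> \<le> 1" using pm1[OF x1] cb unfolding k_def by auto
    have Y1: "0 \<le> W E1 \<theta>' x1" using W_nonneg[OF x1 f1(2) bd1(2)] .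
    have sY2: "(\<Sum>x2\<in>spins V2. W E2 \<theta>' x2) = 2" using W_total[OF t2] .
    have sAX: "(\<Sum>x2\<in>spins V2. (1 + k * x2 v) / 2 * W E2 \<theta> x2) = 1"
    proof -
      have "(\<Sum>x2\<in>spins V2. (1 + k * x2 v) / 2 * W E2 \<theta> x2) = (1 + k) / 2 * 1 + (1 - k) / 2 * 1"
        using inner_avg[OF f2(1) v, of k "W E2 \<theta>"] W_sum[OF t2 v, of 1 \<theta>] W_sum[OF t2 v, of "-1" \<theta>] by simp
      then show ?thesis by (simp add: field_simps)
    qed
    have sAD: "(\<Sum>x2\<in>spins V2. (1 + k * x2 v) / 2 * \<bar>W E2 \<theta> x2 - W E2 \<theta>' x2\<bar>) \<le> B2"
    proof -
      have "(\<Sum>x2\<in>spins V2. (1 + k * x2 v) / 2 * \<bar>W E2 \<theta> x2 - W E2 \<theta>' x2\<bar>) =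
        (1 + k) / 2 * (\<Sum>x2\<in>spins V2. if x2 v = 1 then \<bar>W E2 \<theta> x2 - W E2 \<theta>' x2\<bar> else 0) +
        (1 - k) / 2 * (\<Sum>x2\<in>spins V2. if x2 v = -1 then \<bar>W E2 \<theta> x2 - W E2 \<theta>' x2\<bar> else 0)"
        by (rule inner_avg[OF f2(1) v])
      also have "\<dots> \<le> B2" unfolding B2_def
        by (rule avg_le[OF kb IH2[OF v] IH2[OF v]]) simp_all
      finally show ?thesis .
    qed
    have "(\<Sum>x2\<in>spins V2. \<bar>W ?E \<theta> (merge V1 x1 x2) - W ?E \<theta>' (merge V1 x1 x2)\<bar>) \<le>
      (\<Sum>x2\<in>spins V2. \<bar>c - c'\<bar> / 2 * W E1 \<theta>' x1 * W E2 \<theta>' x2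
      + \<bar>W E1 \<theta> x1 - W E1 \<theta>' x1\<bar> * ((1 + k * x2 v) / 2 * W E2 \<theta> x2)
      + W E1 \<theta>' x1 * ((1 + k * x2 v) / 2 * \<bar>W E2 \<theta> x2 - W E2 \<theta>' x2\<bar>))"
      unfolding k_def by (rule sum_mono) (rule pt[OF x1])
    also have "\<dots> = \<bar>c - c'\<bar> / 2 * W E1 \<theta>' x1 * (\<Sum>x2\<in>spins V2. W E2 \<theta>' x2)
      + \<bar>W E1 \<theta> x1 - W E1 \<theta>' x1\<bar> * (\<Sum>x2\<in>spins V2. (1 + k * x2 v) / 2 * W E2 \<theta> x2)
      + W E1 \<theta>' x1 * (\<Sum>x2\<in>spins V2. (1 + k * x2 v) / 2 * \<bar>W E2 \<theta> x2 - W E2 \<theta>' x2\<bar>)"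
      by (simp add: sum.distrib sum_distrib_left)
    also have "\<dots> \<le> \<bar>c - c'\<bar> / 2 * W E1 \<theta>' x1 * 2 + \<bar>W E1 \<theta> x1 - W E1 \<theta>' x1\<bar> * 1 + W E1 \<theta>' x1 * B2"
      unfolding sY2 sAX using sAD Y1 by (simp add: mult_left_mono)
    also have "\<dots> = \<bar>c - c'\<bar> * W E1 \<theta>' x1 + \<bar>W E1 \<theta> x1 - W E1 \<theta>' x1\<bar> + W E1 \<theta>' x1 * B2"
      by simp
    finally show ?thesis .
  qed
  have SY1: "(\<Sum>x1\<in>spins V1. if x1 r = s then W E1 \<theta>' x1 else 0) = 1" using W_sum[OF t1 r s] .
  have "(\<Sum>x\<in>spins (V1 \<union> V2). if x r = s then \<bar>W ?E \<theta> x - W ?E \<theta>' x\<bar> else 0) =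
     (\<Sum>x1\<in>spins V1. if x1 r = s then (\<Sum>x2\<in>spins V2. \<bar>W ?E \<theta> (merge V1 x1 x2) - W ?E \<theta>' (merge V1 x1 x2)\<bar>) else 0)"
    by (rule sum_merge_left[OF dj f1(1) f2(1) r])
  also have "\<dots> \<le> (\<Sum>x1\<in>spins V1. if x1 r = s then
       \<bar>c - c'\<bar> * W E1 \<theta>' x1 + \<bar>W E1 \<theta> x1 - W E1 \<theta>' x1\<bar> + B2 * W E1 \<theta>' x1 else 0)"
    by (rule sum_if_mono) (use inner in \<open>auto simp: mult.commute\<close>)
  also have "\<dots> = \<bar>c - c'\<bar> * (\<Sum>x1\<in>spins V1. if x1 r = s then W E1 \<theta>' x1 else 0)
     + (\<Sum>x1\<in>spins V1. if x1 r = s then \<bar>W E1 \<theta> x1 - W E1 \<theta>' x1\<bar> else 0)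
     + B2 * (\<Sum>x1\<in>spins V1. if x1 r = s then W E1 \<theta>' x1 else 0)"
    by (simp only: sum_if_add sum_if_const)
  also have "\<dots> \<le> \<bar>c - c'\<bar> + B1 + B2"
    unfolding SY1 B1_def using IH1[OF r s] by simp
  also have "\<dots> = (\<Sum>e\<in>?E. \<bar>\<theta> e - \<theta>' e\<bar>)" using sumE by simp
  finally show ?thesis .
qed

lemma D_bound:
  fixes \<theta> \<theta>' :: "nat set \<Rightarrow> real"
  assumes "tree_ind V E"
  shows "\<forall>e\<in>E. \<bar>\<theta> e\<bar> \<le> 1 \<Longrightarrow> \<forall>e\<in>E. \<bar>\<theta>' e\<bar> \<le> 1 \<Longrightarrow> r \<in> V \<Longrightarrow> s = 1 \<or> s = -1 \<Longrightarrow>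
    (\<Sum>x\<in>spins V. if x r = s then \<bar>W E \<theta> x - W E \<theta>' x\<bar> else 0) \<le> (\<Sum>e\<in>E. \<bar>\<theta> e - \<theta>' e\<bar>)"
  using assms
proof (induction arbitrary: r s rule: tree_ind.induct)
  case (single r0)
  then show ?case unfolding W_def prod.empty by (simp cong: if_cong)
next
  case (join V1 E1 V2 E2 u v)
  have b1: "\<forall>e\<in>E1. \<bar>\<theta> e\<bar> \<le> 1" "\<forall>e\<in>E1. \<bar>\<theta>' e\<bar> \<le> 1" using join.prems(1,2) by auto
  have b2: "\<forall>e\<in>E2. \<bar>\<theta> e\<bar> \<le> 1" "\<forall>e\<in>E2. \<bar>\<theta>' e\<bar> \<le> 1" using join.prems(1,2) by auto
  have IH1: "\<And>r s. r \<in> V1 \<Longrightarrow> s = 1 \<or> s = -1 \<Longrightarrow>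
       (\<Sum>x\<in>spins V1. if x r = s then \<bar>W E1 \<theta> x - W E1 \<theta>' x\<bar> else 0) \<le> (\<Sum>e\<in>E1. \<bar>\<theta> e - \<theta>' e\<bar>)"
    using join.IH(1)[OF b1] .
  have IH2: "\<And>r s. r \<in> V2 \<Longrightarrow> s = 1 \<or> s = -1 \<Longrightarrow>
       (\<Sum>x\<in>spins V2. if x r = s then \<bar>W E2 \<theta> x - W E2 \<theta>' x\<bar> else 0) \<le> (\<Sum>e\<in>E2. \<bar>\<theta> e - \<theta>' e\<bar>)"
    using join.IH(2)[OF b2] .
  show ?case
  proof (cases "r \<in> V1")
    case True
    show ?thesis using D_join_left[OF join.hyps join.prems(1,2) IH1 IH2 True join.prems(4)] .
  next
    case False
    then have r2: "r \<in> V2" using join.prems(3) by blast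
    have dj': "V2 \<inter> V1 = {}" using join.hyps(3) by blast
    have p1: "\<forall>e\<in>insert {v, u} (E2 \<union> E1). \<bar>\<theta> e\<bar> \<le> 1" using join.prems(1) unfolding join_swap(2)[of u v E1 E2] .
    have p2: "\<forall>e\<in>insert {v, u} (E2 \<union> E1). \<bar>\<theta>' e\<bar> \<le> 1" using join.prems(2) unfolding join_swap(2)[of u v E1 E2] .
    show ?thesis unfolding join_swap(1)[of V1 V2] join_swap(2)[of u v E1 E2]
      using D_join_left[OF join.hyps(2,1) dj' join.hyps(5,4) p1 p2 IH2 IH1 r2 join.prems(4)] .
  qed
qed



lemma ising_facts:
  assumes "ising_model n (V, E, \<theta>)"
  shows "tree_ind V E" "{1..n} \<subseteq> V" "\<forall>e\<in>E. \<bar>\<theta> e\<bar> \<le> 1"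
    "{v \<in> V. degree E v \<le> 1} = {1..n}" "\<forall>v\<in>V. v \<notin> {1..n} \<longrightarrow> degree E v = 3"
proof -
  have a: "is_tree V E" "{v \<in> V. degree E v \<le> 1} = {1..n}" "\<forall>v\<in>V. v \<notin> {1..n} \<longrightarrow> degree E v = 3"
    "\<forall>e\<in>E. -1 \<le> \<theta> e \<and> \<theta> e \<le> 1"
    using assms unfolding ising_model_def by auto
  show "tree_ind V E" using a(1) tree_iff by blast
  show "{1..n} \<subseteq> V" using a(2) by blast
  show "\<forall>e\<in>E. \<bar>\<theta> e\<bar> \<le> 1" using a(4) by (simp add: abs_le_iff)
  show "{v \<in> V. degree E v \<le> 1} = {1..n}" "\<forall>v\<in>V. v \<notin> {1..n} \<longrightarrow> degree E v = 3" using a by auto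
qed

lemma total_abs_bound:
  assumes t: "tree_ind V E" and b: "\<forall>e\<in>E. \<bar>\<theta> e\<bar> \<le> 1" and b': "\<forall>e\<in>E. \<bar>\<theta>' e\<bar> \<le> 1"
  shows "(\<Sum>x\<in>spins V. \<bar>W E \<theta> x - W E \<theta>' x\<bar>) \<le> 2 * (\<Sum>e\<in>E. \<bar>\<theta> e - \<theta>' e\<bar>)"
proof -
  have "V \<noteq> {}" using tree_ind_basic[OF t] by simp
  then obtain r where r: "r \<in> V" by blast
  have f: "finite V" using tree_ind_basic[OF t] by simp
  have "(\<Sum>x\<in>spins V. \<bar>W E \<theta> x - W E \<theta>' x\<bar>) =
    (\<Sum>x\<in>spins V. if x r = 1 then \<bar>W E \<theta> x - W E \<theta>' x\<bar> else 0) +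
    (\<Sum>x\<in>spins V. if x r = -1 then \<bar>W E \<theta> x - W E \<theta>' x\<bar> else 0)"
    using sum_by_val[OF f r, of "\<lambda>t x. \<bar>W E \<theta> x - W E \<theta>' x\<bar>"] by simp
  also have "\<dots> \<le> (\<Sum>e\<in>E. \<bar>\<theta> e - \<theta>' e\<bar>) + (\<Sum>e\<in>E. \<bar>\<theta> e - \<theta>' e\<bar>)"
    using D_bound[OF t b b' r] by (intro add_mono) auto
  finally show ?thesis by simp
qed

lemma partition_two: "tree_ind V E \<Longrightarrow> partition_fn (V, E, \<theta>) = 2"
  unfolding partition_fn_def weight_W fst_conv using W_total by blast

lemma tv_same_tree:
  assumes t: "tree_ind V E" and sub: "{1..n} \<subseteq> V"
    and b: "\<forall>e\<in>E. \<bar>\<theta> e\<bar> \<le> 1" and b': "\<forall>e\<in>E. \<bar>\<theta>' e\<bar> \<le> 1"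
  shows "tv_dist n (leaf_dist n (V, E, \<theta>)) (leaf_dist n (V, E, \<theta>')) \<le> (\<Sum>e\<in>E. \<bar>\<theta> e - \<theta>' e\<bar>) / 2"
proof -
  let ?F = "\<lambda>y. {x \<in> spins V. restrict x {1..n} = y}"
  have f: "finite V" using tree_ind_basic[OF t] by simp
  have fs: "finite (spins V)" using finite_spins[OF f] .
  have ld: "leaf_dist n (V, E, th) y = (\<Sum>x\<in>?F y. W E th x) / 2" for th y
    unfolding leaf_dist_def partition_two[OF t] weight_W fst_conv ..
  have pt: "\<bar>leaf_dist n (V, E, \<theta>) y - leaf_dist n (V, E, \<theta>') y\<bar> \<le> (\<Sum>x\<in>?F y. \<bar>W E \<theta> x - W E \<theta>' x\<bar>) / 2" for y
  proof -
    have eq: "leaf_dist n (V, E, \<theta>) y - leaf_dist n (V, E, \<theta>') y = (\<Sum>x\<in>?F y. W E \<theta> x - W E \<theta>' x) / 2"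
      unfolding ld by (simp add: sum_subtractf diff_divide_distrib)
    have "\<bar>\<Sum>x\<in>?F y. W E \<theta> x - W E \<theta>' x\<bar> \<le> (\<Sum>x\<in>?F y. \<bar>W E \<theta> x - W E \<theta>' x\<bar>)"
      by (rule sum_abs)
    then have "\<bar>\<Sum>x\<in>?F y. W E \<theta> x - W E \<theta>' x\<bar> / 2 \<le> (\<Sum>x\<in>?F y. \<bar>W E \<theta> x - W E \<theta>' x\<bar>) / 2"
      by (rule divide_right_mono) simp
    then show ?thesis unfolding eq abs_divide by simp
  qed
  have img: "(\<lambda>x. restrict x {1..n}) ` spins V \<subseteq> spins {1..n}"
    using sub unfolding spins_def by (auto simp: PiE_iff)
  have grp: "(\<Sum>y\<in>spins {1..n}. \<Sum>x\<in>?F y. \<bar>W E \<theta> x - W E \<theta>' x\<bar>) = (\<Sum>x\<in>spins V. \<bar>W E \<theta> x - W E \<theta>' x\<bar>)"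
    by (rule sum.group[OF fs finite_spins[of "{1..n}"] img]) simp
  have "tv_dist n (leaf_dist n (V, E, \<theta>)) (leaf_dist n (V, E, \<theta>')) =
     (1/2) * (\<Sum>y\<in>spins {1..n}. \<bar>leaf_dist n (V, E, \<theta>) y - leaf_dist n (V, E, \<theta>') y\<bar>)"
    unfolding tv_dist_def ..
  also have "\<dots> \<le> (1/2) * (\<Sum>y\<in>spins {1..n}. (\<Sum>x\<in>?F y. \<bar>W E \<theta> x - W E \<theta>' x\<bar>) / 2)"
    using pt by (intro mult_left_mono sum_mono) auto
  also have "\<dots> = (1/4) * (\<Sum>x\<in>spins V. \<bar>W E \<theta> x - W E \<theta>' x\<bar>)"
    unfolding grp[symmetric] by (simp add: sum_divide_distrib[symmetric])
  also have "\<dots> \<le> (1/4) * (2 * (\<Sum>e\<in>E. \<bar>\<theta> e - \<theta>' e\<bar>))"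
    using total_abs_bound[OF t b b'] by simp
  also have "\<dots> = (\<Sum>e\<in>E. \<bar>\<theta> e - \<theta>' e\<bar>) / 2" by simp
  finally show ?thesis .
qed



lemma handshake:
  assumes f: "finite V" and fe: "finite E" and ok: "edges_ok V E"
  shows "(\<Sum>v\<in>V. degree E v) = 2 * card E"
proof -
  have "(\<Sum>v\<in>V. degree E v) = (\<Sum>v\<in>V. \<Sum>e\<in>E. if v \<in> e then (1::nat) else 0)"
    unfolding degree_def using fe by (simp add: sum.inter_filter[symmetric])
  also have "\<dots> = (\<Sum>e\<in>E. \<Sum>v\<in>V. if v \<in> e then (1::nat) else 0)"
    by (rule sum.swap)
  also have "\<dots> = (\<Sum>e\<in>E. 2)"
  proof (rule sum.cong[OF refl])
    fix e assume e: "e \<in> E"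
    have "(\<Sum>v\<in>V. if v \<in> e then (1::nat) else 0) = card {v \<in> V. v \<in> e}"
      using f by (simp add: sum.inter_filter[symmetric])
    also have "{v \<in> V. v \<in> e} = e" using edges_ok_sub[OF ok e] by blast
    also have "card e = 2" using edges_ok_card[OF ok e] .
    finally show "(\<Sum>v\<in>V. if v \<in> e then (1::nat) else 0) = 2" .
  qed
  finally show ?thesis by simp
qed

lemma vertex_bound:
  assumes m: "ising_model n (V, E, \<theta>)" and n: "n \<ge> 1"
  shows "card V + 2 \<le> 3 * n" "card V = card E + 1" "finite V" "finite E"
proof -
  note I = ising_facts[OF m]
  have b: "finite V" "finite E" "edges_ok V E" "card V = card E + 1" using tree_ind_basic[OF I(1)] by auto
  show "card V = card E + 1" "finite V" "finite E" using b by auto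
  have hs: "(\<Sum>v\<in>V. degree E v) = 2 * card E" using handshake[OF b(1,2,3)] .
  have "(\<Sum>v\<in>V - {1..n}. degree E v) \<le> (\<Sum>v\<in>V. degree E v)"
    using b(1) by (intro sum_mono2) auto
  moreover have "(\<Sum>v\<in>V - {1..n}. degree E v) = (\<Sum>v\<in>V - {1..n}. 3)"
    using I(5) by (intro sum.cong) auto
  moreover have "card (V - {1..n}) = card V - n" using I(2) b(1) by (simp add: card_Diff_subset)
  moreover have "n \<le> card V" using I(2) b(1) by (metis card_atLeastAtMost card_mono diff_Suc_1)
  ultimately have "3 * (card V - n) \<le> 2 * card E" using hs by simp
  then show "card V + 2 \<le> 3 * n" using b(4) \<open>n \<le> card V\<close> n by linarith
qed



lemma tree_ind_image: "tree_ind V E \<Longrightarrow> inj_on f V \<Longrightarrow> tree_ind (f ` V) ((`) f ` E)"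
proof (induction rule: tree_ind.induct)
  case (single r)
  then show ?case using tree_ind.single by simp
next
  case (join V1 E1 V2 E2 u v)
  have i1: "inj_on f V1" and i2: "inj_on f V2" using join.prems by (auto intro: inj_on_subset)
  have d: "f ` V1 \<inter> f ` V2 = {}" using join.prems join.hyps(3) by (auto simp: inj_on_def)
  have "tree_ind (f ` V1 \<union> f ` V2) (insert {f u, f v} ((`) f ` E1 \<union> (`) f ` E2))"
    using tree_ind.join[OF join.IH(1)[OF i1] join.IH(2)[OF i2] d] join.hyps(4,5) by blast
  moreover have "f ` (V1 \<union> V2) = f ` V1 \<union> f ` V2" by (rule image_Un)
  moreover have "(`) f ` insert {u, v} (E1 \<union> E2) = insert {f u, f v} ((`) f ` E1 \<union> (`) f ` E2)"
    by (simp add: image_Un)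
  ultimately show ?case by simp
qed

definition relabel :: "(nat \<Rightarrow> nat) \<Rightarrow> ising \<Rightarrow> ising" where
  "relabel f M = (case M of (V, E, \<theta>) \<Rightarrow> (f ` V, (`) f ` E, \<lambda>e. \<theta> (inv_into V f ` e)))"

lemma degree_image:
  assumes inj: "inj_on f V" and sub: "\<forall>e\<in>E. e \<subseteq> V" and w: "w \<in> V"
  shows "degree ((`) f ` E) (f w) = degree E w"
proof -
  have iE: "inj_on ((`) f) E" using inj_on_image_Pow[OF inj] sub by (meson PowI inj_on_subset subsetI)
  have "{e' \<in> (`) f ` E. f w \<in> e'} = (`) f ` {e \<in> E. w \<in> e}"
  proof
    show "{e' \<in> (`) f ` E. f w \<in> e'} \<subseteq> (`) f ` {e \<in> E. w \<in> e}"
    proof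
      fix e' assume "e' \<in> {e' \<in> (`) f ` E. f w \<in> e'}"
      then obtain e where e: "e \<in> E" "e' = f ` e" "f w \<in> f ` e" by blast
      then obtain w' where "w' \<in> e" "f w' = f w" by auto
      moreover have "w' \<in> V" using \<open>w' \<in> e\<close> e(1) sub by blast
      ultimately have "w' = w" using inj w by (meson inj_onD)
      then show "e' \<in> (`) f ` {e \<in> E. w \<in> e}" using e \<open>w' \<in> e\<close> by blast
    qed
    show "(`) f ` {e \<in> E. w \<in> e} \<subseteq> {e' \<in> (`) f ` E. f w \<in> e'}" by blast
  qed
  then have "degree ((`) f ` E) (f w) = card ((`) f ` {e \<in> E. w \<in> e})" unfolding degree_def by simp
  also have "\<dots> = card {e \<in> E. w \<in> e}" using iE by (simp add: card_image inj_on_subset)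
  finally show ?thesis unfolding degree_def .
qed

lemma relabel_ising:
  assumes m: "ising_model n (V, E, \<theta>)" and inj: "inj_on f V" and fix1: "\<forall>i\<in>{1..n}. f i = i"
  shows "ising_model n (relabel f (V, E, \<theta>))"
proof -
  note I = ising_facts[OF m]
  have ok: "edges_ok V E" using tree_ind_basic[OF I(1)] by simp
  have sub: "\<forall>e\<in>E. e \<subseteq> V" using edges_ok_sub[OF ok] by blast
  have t: "is_tree (f ` V) ((`) f ` E)" using tree_ind_image[OF I(1) inj] tree_iff by blast
  have bk: "f w \<in> {1..n} \<longleftrightarrow> w \<in> {1..n}" if "w \<in> V" for w
  proof
    assume "f w \<in> {1..n}"
    then have "f (f w) = f w" using fix1 by blast
    moreover have "f w \<in> V" using \<open>f w \<in> {1..n}\<close> I(2) by blast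
    ultimately have "f w = w" using inj that by (meson inj_onD)
    then show "w \<in> {1..n}" using \<open>f w \<in> {1..n}\<close> by simp
  next
    assume "w \<in> {1..n}" then show "f w \<in> {1..n}" using fix1 by simp
  qed
  have leaves: "{v \<in> f ` V. degree ((`) f ` E) v \<le> 1} = {1..n}"
  proof
    show "{v \<in> f ` V. degree ((`) f ` E) v \<le> 1} \<subseteq> {1..n}"
    proof
      fix v assume "v \<in> {v \<in> f ` V. degree ((`) f ` E) v \<le> 1}"
      then obtain w where w: "w \<in> V" "v = f w" "degree ((`) f ` E) (f w) \<le> 1" by blast
      then have "degree E w \<le> 1" using degree_image[OF inj sub w(1)] by simp
      then have "w \<in> {1..n}" using I(4) w(1) by blast
      then show "v \<in> {1..n}" using bk w by blast
    qed
    show "{1..n} \<subseteq> {v \<in> f ` V. degree ((`) f ` E) v \<le> 1}"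
    proof
      fix i assume i: "i \<in> {1..n}"
      then have iV: "i \<in> V" and fi: "f i = i" using I(2) fix1 by auto
      have "degree E i \<le> 1" using I(4) i iV by blast
      then have "degree ((`) f ` E) (f i) \<le> 1" using degree_image[OF inj sub iV] by simp
      then show "i \<in> {v \<in> f ` V. degree ((`) f ` E) v \<le> 1}" using fi iV by (metis (mono_tags, lifting) image_eqI mem_Collect_eq)
    qed
  qed
  have inner: "\<forall>v\<in>f ` V. v \<notin> {1..n} \<longrightarrow> degree ((`) f ` E) v = 3"
  proof (intro ballI impI)
    fix v assume "v \<in> f ` V" "v \<notin> {1..n}"
    then obtain w where w: "w \<in> V" "v = f w" by blast
    then have "w \<notin> {1..n}" using bk \<open>v \<notin> {1..n}\<close> by blast
    then have "degree E w = 3" using I(5) w(1) by blast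
    then show "degree ((`) f ` E) v = 3" using degree_image[OF inj sub w(1)] w(2) by simp
  qed
  have th: "\<forall>e'\<in>(`) f ` E. -1 \<le> \<theta> (inv_into V f ` e') \<and> \<theta> (inv_into V f ` e') \<le> 1"
  proof
    fix e' assume "e' \<in> (`) f ` E"
    then obtain e where e: "e \<in> E" "e' = f ` e" by blast
    then have "inv_into V f ` e' = e" using inv_into_image_cancel[OF inj] sub by blast
    then show "-1 \<le> \<theta> (inv_into V f ` e') \<and> \<theta> (inv_into V f ` e') \<le> 1" using I(3) e(1) by (simp add: abs_le_iff)
  qed
  show ?thesis unfolding relabel_def ising_model_def using t leaves inner th by simp
qed



lemma relabel_bij:
  assumes inj: "inj_on f V"
  shows "bij_betw (\<lambda>x j. if j \<in> f ` V then x (inv_into V f j) else undefined) (spins V) (spins (f ` V))"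
proof (rule bij_betwI[where g = "\<lambda>x. restrict (x \<circ> f) V"])
  show "(\<lambda>x j. if j \<in> f ` V then x (inv_into V f j) else undefined) \<in> spins V \<rightarrow> spins (f ` V)"
    unfolding spins_def by (auto simp: PiE_iff inv_into_into)
  show "(\<lambda>x. restrict (x \<circ> f) V) \<in> spins (f ` V) \<rightarrow> spins V"
    unfolding spins_def by (auto simp: PiE_iff)
  show "restrict ((\<lambda>j. if j \<in> f ` V then x (inv_into V f j) else undefined) \<circ> f) V = x"
    if "x \<in> spins V" for x
    using that inj unfolding spins_def by (auto simp: PiE_iff extensional_def fun_eq_iff)
  show "(\<lambda>j. if j \<in> f ` V then restrict (y \<circ> f) V (inv_into V f j) else undefined) = y"
    if "y \<in> spins (f ` V)" for y
    using that inj unfolding spins_def by (auto simp: PiE_iff extensional_def fun_eq_iff inv_into_into f_inv_into_f)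
qed

lemma W_relabel:
  assumes inj: "inj_on f V" and sub: "\<forall>e\<in>E. e \<subseteq> V"
  shows "W ((`) f ` E) (\<lambda>e. \<theta> (inv_into V f ` e)) (\<lambda>j. if j \<in> f ` V then x (inv_into V f j) else undefined)
     = W E \<theta> x"
proof -
  let ?y = "\<lambda>j. if j \<in> f ` V then x (inv_into V f j) else undefined"
  have iE: "inj_on ((`) f) E" using inj_on_image_Pow[OF inj] sub by (meson PowI inj_on_subset subsetI)
  have "W ((`) f ` E) (\<lambda>e. \<theta> (inv_into V f ` e)) ?y = (\<Prod>e\<in>E. fac (\<lambda>e. \<theta> (inv_into V f ` e)) (f ` e) ?y)"
    unfolding W_def using prod.reindex[OF iE] by simp
  also have "\<dots> = (\<Prod>e\<in>E. fac \<theta> e x)"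
  proof (rule prod.cong[OF refl])
    fix e assume e: "e \<in> E"
    have es: "e \<subseteq> V" using sub e by blast
    have ie: "inj_on f e" using inj es by (rule inj_on_subset)
    have c: "inv_into V f ` f ` e = e" using inv_into_image_cancel[OF inj es] .
    have "(\<Prod>j\<in>f ` e. ?y j) = (\<Prod>w\<in>e. ?y (f w))" using prod.reindex[OF ie] by simp
    also have "\<dots> = (\<Prod>w\<in>e. x w)"
    proof (rule prod.cong[OF refl])
      fix w assume "w \<in> e"
      then have "w \<in> V" using es by blast
      then show "?y (f w) = x w" using inj by simp
    qed
    finally show "fac (\<lambda>e. \<theta> (inv_into V f ` e)) (f ` e) ?y = fac \<theta> e x"
      unfolding fac_def c by simp
  qed
  finally show ?thesis unfolding W_def .
qed

lemma relabel_leaf: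
  assumes m: "ising_model n (V, E, \<theta>)" and inj: "inj_on f V" and fix1: "\<forall>i\<in>{1..n}. f i = i"
  shows "leaf_dist n (relabel f (V, E, \<theta>)) = leaf_dist n (V, E, \<theta>)"
proof
  fix y
  note I = ising_facts[OF m]
  let ?\<phi> = "\<lambda>x j. if j \<in> f ` V then x (inv_into V f j) else undefined"
  let ?\<theta> = "\<lambda>e. \<theta> (inv_into V f ` e)"
  have ok: "edges_ok V E" using tree_ind_basic[OF I(1)] by simp
  have sub: "\<forall>e\<in>E. e \<subseteq> V" using edges_ok_sub[OF ok] by blast
  have fV: "finite V" using tree_ind_basic[OF I(1)] by simp
  have t2: "tree_ind (f ` V) ((`) f ` E)" using tree_ind_image[OF I(1) inj] .
  have res: "restrict (?\<phi> x) {1..n} = restrict x {1..n}" for x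
  proof -
    have "?\<phi> x i = x i" if "i \<in> {1..n}" for i
    proof -
      have iV: "i \<in> V" using that I(2) by blast
      have "f i = i" using fix1 that by blast
      then have "i \<in> f ` V" using iV by force
      moreover have "inv_into V f i = i" using inv_into_f_f[OF inj iV] \<open>f i = i\<close> by simp
      ultimately show ?thesis by simp
    qed
    then show ?thesis by (auto simp: fun_eq_iff)
  qed
  have "(\<Sum>x\<in>{x \<in> spins (f ` V). restrict x {1..n} = y}. W ((`) f ` E) ?\<theta> x) =
    (\<Sum>x\<in>spins (f ` V). if restrict x {1..n} = y then W ((`) f ` E) ?\<theta> x else 0)"
    using finite_spins[of "f ` V"] fV by (simp add: sum.inter_filter)
  also have "\<dots> = (\<Sum>x\<in>spins V. if restrict (?\<phi> x) {1..n} = y then W ((`) f ` E) ?\<theta> (?\<phi> x) else 0)"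
    by (rule sum.reindex_bij_betw[OF relabel_bij[OF inj], symmetric])
  also have "\<dots> = (\<Sum>x\<in>spins V. if restrict x {1..n} = y then W E \<theta> x else 0)"
    unfolding res W_relabel[OF inj sub] ..
  also have "\<dots> = (\<Sum>x\<in>{x \<in> spins V. restrict x {1..n} = y}. W E \<theta> x)"
    using finite_spins[OF fV] by (simp add: sum.inter_filter)
  finally have num: "(\<Sum>x\<in>{x \<in> spins (f ` V). restrict x {1..n} = y}. W ((`) f ` E) ?\<theta> x) =
     (\<Sum>x\<in>{x \<in> spins V. restrict x {1..n} = y}. W E \<theta> x)" .
  show "leaf_dist n (relabel f (V, E, \<theta>)) y = leaf_dist n (V, E, \<theta>) y"
    unfolding relabel_def leaf_dist_def prod.case partition_two[OF t2] partition_two[OF I(1)]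
      weight_W fst_conv num ..
qed



lemma degree_out: "tree_ind V E \<Longrightarrow> w \<notin> V \<Longrightarrow> degree E w = 0"
proof -
  assume t: "tree_ind V E" and w: "w \<notin> V"
  have "edges_ok V E" using tree_ind_basic[OF t] by simp
  then have e: "{e \<in> E. w \<in> e} = {}" using w edges_ok_sub by blast
  show ?thesis unfolding degree_def e by simp
qed

lemma degree_join:
  assumes t1: "tree_ind V1 E1" and t2: "tree_ind V2 E2" and dj: "V1 \<inter> V2 = {}"
    and u: "u \<in> V1" and v: "v \<in> V2"
  shows "degree (insert {u, v} (E1 \<union> E2)) w = degree E1 w + degree E2 w + (if w = u \<or> w = v then 1 else 0)"
proof -
  have jf: "finite E1" "finite E2" "E1 \<inter> E2 = {}" "{u, v} \<notin> E1 \<union> E2"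
    using join_facts[OF t1 t2 dj u v] by auto
  have eq: "{e \<in> insert {u, v} (E1 \<union> E2). w \<in> e} =
     (if w = u \<or> w = v then {{u, v}} else {}) \<union> ({e \<in> E1. w \<in> e} \<union> {e \<in> E2. w \<in> e})"
    by auto
  have d1: "{e \<in> E1. w \<in> e} \<inter> {e \<in> E2. w \<in> e} = {}" using jf(3) by blast
  have c12: "card ({e \<in> E1. w \<in> e} \<union> {e \<in> E2. w \<in> e}) = card {e \<in> E1. w \<in> e} + card {e \<in> E2. w \<in> e}"
    using jf(1,2) d1 by (simp add: card_Un_disjoint)
  show ?thesis
  proof (cases "w = u \<or> w = v")
    case True
    have "{{u, v}} \<inter> ({e \<in> E1. w \<in> e} \<union> {e \<in> E2. w \<in> e}) = {}" using jf(4) by blast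
    then have "card ({{u, v}} \<union> ({e \<in> E1. w \<in> e} \<union> {e \<in> E2. w \<in> e})) =
      1 + card ({e \<in> E1. w \<in> e} \<union> {e \<in> E2. w \<in> e})"
      using jf(1,2) by (subst card_Un_disjoint) auto
    then show ?thesis unfolding degree_def eq using True c12 by simp
  next
    case False
    then show ?thesis unfolding degree_def eq using c12 by simp
  qed
qed

lemma edge_tree:
  assumes "a \<noteq> b"
  shows "tree_ind {a, b} {{a, b}}" "degree {{a, b}} w = (if w = a \<or> w = b then 1 else 0)"
proof -
  have t: "tree_ind ({a} \<union> {b}) (insert {a, b} ({} \<union> {}))"
    by (rule tree_ind.join[OF tree_ind.single tree_ind.single]) (use assms in auto)
  have "{a} \<union> {b} = {a, b}" "insert {a, b} ({} \<union> {}) = {{a, b}}" by auto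
  then show "tree_ind {a, b} {{a, b}}" using t by simp
  have "degree (insert {a, b} ({} \<union> {})) w = degree {} w + degree {} w + (if w = a \<or> w = b then 1 else 0)"
    by (rule degree_join[OF tree_ind.single tree_ind.single]) (use assms in auto)
  then show "degree {{a, b}} w = (if w = a \<or> w = b then 1 else 0)" unfolding degree_def by simp
qed

lemma cat_step:
  assumes n: "3 \<le> n"
  shows "1 \<le> m \<Longrightarrow> m \<le> n - 2 \<Longrightarrow> \<exists>E. tree_ind ({1..m+1} \<union> {n+1..n+m}) E \<and>
     (\<forall>w. degree E w = (if w \<in> {1..m+1} then 1 else if w = n + m then 2
                           else if w \<in> {n+1..n+m} then 3 else 0))"
proof (induction m rule: nat_induct_at_least)
  case base
  have ne: "(1::nat) \<noteq> n + 1" using n by simp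
  note P1 = edge_tree[OF ne]
  have t1: "tree_ind {1, n+1} {{1, n+1}}" using P1(1) .
  have dj: "{1, n+1} \<inter> {2::nat} = {}" using n by auto
  have t: "tree_ind ({1, n+1} \<union> {2}) (insert {n+1, 2} ({{1, n+1}} \<union> {}))"
    by (rule tree_ind.join[OF t1 tree_ind.single dj]) auto
  have dg: "degree (insert {n+1, 2} ({{1, n+1}} \<union> {})) w =
      degree {{1, n+1}} w + degree {} w + (if w = n+1 \<or> w = 2 then 1 else 0)" for w
    by (rule degree_join[OF t1 tree_ind.single dj]) auto
  have V: "{1, n+1} \<union> {2} = {1..1+1} \<union> {n+1..n+1}" by auto
  show ?case
  proof (intro exI conjI)
    show "tree_ind ({1..1+1} \<union> {n+1..n+1}) (insert {n+1, 2} ({{1, n+1}} \<union> {}))" using t V by simp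
    show "\<forall>w. degree (insert {n+1, 2} ({{1, n+1}} \<union> {})) w = (if w \<in> {1..1+1} then 1 else if w = n + 1 then 2
                           else if w \<in> {n+1..n+1} then 3 else 0)"
    proof
      fix w
      show "degree (insert {n+1, 2} ({{1, n+1}} \<union> {})) w = (if w \<in> {1..1+1} then 1 else if w = n + 1 then 2
                           else if w \<in> {n+1..n+1} then 3 else 0)"
        unfolding dg P1(2)[of w] using n by (simp add: degree_def)
    qed
  qed
next
  case (Suc m)
  have m1: "1 \<le> m" and m2: "m + 1 \<le> n - 2" using Suc by auto
  have mm: "m \<le> n - 2" using m2 by linarith
  obtain E where E: "tree_ind ({1..m+1} \<union> {n+1..n+m}) E"
    "\<forall>w. degree E w = (if w \<in> {1..m+1} then 1 else if w = n + m then 2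
                           else if w \<in> {n+1..n+m} then 3 else 0)"
    using Suc.IH[OF mm] by blast
  have ab: "m + 2 \<noteq> n + m + 1" using n by simp
  note P = edge_tree[OF ab]
  have dj: "({1..m+1} \<union> {n+1..n+m}) \<inter> {m+2, n+m+1} = {}" using m2 by auto
  have u: "n + m \<in> {1..m+1} \<union> {n+1..n+m}" using m1 by auto
  have v: "n + m + 1 \<in> {m+2, n+m+1}" by simp
  have t: "tree_ind (({1..m+1} \<union> {n+1..n+m}) \<union> {m+2, n+m+1}) (insert {n+m, n+m+1} (E \<union> {{m+2, n+m+1}}))"
    by (rule tree_ind.join[OF E(1) P(1) dj u v])
  have dg: "degree (insert {n+m, n+m+1} (E \<union> {{m+2, n+m+1}})) w =
      degree E w + degree {{m+2, n+m+1}} w + (if w = n+m \<or> w = n+m+1 then 1 else 0)" for w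
    by (rule degree_join[OF E(1) P(1) dj u v])
  have V: "({1..m+1} \<union> {n+1..n+m}) \<union> {m+2, n+m+1} = {1..Suc m+1} \<union> {n+1..n+Suc m}" by auto
  show ?case
  proof (intro exI conjI)
    show "tree_ind ({1..Suc m+1} \<union> {n+1..n+Suc m}) (insert {n+m, n+m+1} (E \<union> {{m+2, n+m+1}}))"
      using t V by simp
    show "\<forall>w. degree (insert {n+m, n+m+1} (E \<union> {{m+2, n+m+1}})) w =
      (if w \<in> {1..Suc m+1} then 1 else if w = n + Suc m then 2
                           else if w \<in> {n+1..n+Suc m} then 3 else 0)"
    proof
      fix w
      show "degree (insert {n+m, n+m+1} (E \<union> {{m+2, n+m+1}})) w =
      (if w \<in> {1..Suc m+1} then 1 else if w = n + Suc m then 2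
                           else if w \<in> {n+1..n+Suc m} then 3 else 0)"
        unfolding dg E(2)[rule_format] P(2) using m1 m2 by auto
    qed
  qed
qed



lemma exists_model:
  assumes n: "1 \<le> n"
  shows "\<exists>V E. ising_model n (V, E, \<lambda>_. 0)"
proof -
  consider "n = 1" | "n = 2" | "3 \<le> n" using n by linarith
  then show ?thesis
  proof cases
    case 1
    have "ising_model n ({1}, {}, \<lambda>_. 0)"
      unfolding ising_model_def using tree_iff tree_ind.single[of 1] 1 by (auto simp: degree_def)
    then show ?thesis by blast
  next
    case 2
    have ne: "(1::nat) \<noteq> 2" by simp
    note P = edge_tree[OF ne]
    have "{v \<in> {1, 2}. degree {{1, 2}} v \<le> 1} = {1..n}" using 2 P(2) by auto
    then have "ising_model n ({1, 2}, {{1, 2}}, \<lambda>_. 0)"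
      unfolding ising_model_def using tree_iff P(1) 2 by auto
    then show ?thesis by blast
  next
    case 3
    have a: "1 \<le> n - 2" "n - 2 \<le> n - 2" using 3 by auto
    obtain E where E: "tree_ind ({1..n-2+1} \<union> {n+1..n+(n-2)}) E"
      "\<forall>w. degree E w = (if w \<in> {1..n-2+1} then 1 else if w = n + (n-2) then 2
                           else if w \<in> {n+1..n+(n-2)} then 3 else 0)"
      using cat_step[OF 3 a] by blast
    let ?V0 = "{1..n-2+1} \<union> {n+1..n+(n-2)}"
    have dj: "?V0 \<inter> {n} = {}" using 3 by auto
    have u: "n + (n-2) \<in> ?V0" using 3 by auto
    have t: "tree_ind (?V0 \<union> {n}) (insert {n + (n-2), n} (E \<union> {}))"
      by (rule tree_ind.join[OF E(1) tree_ind.single dj u]) simp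
    have dg: "degree (insert {n + (n-2), n} (E \<union> {})) w =
       degree E w + degree {} w + (if w = n + (n-2) \<or> w = n then 1 else 0)" for w
      by (rule degree_join[OF E(1) tree_ind.single dj u]) simp
    have d0: "degree {} w = 0" for w by (simp add: degree_def)
    have dgf: "degree (insert {n + (n-2), n} (E \<union> {})) w =
       (if w \<in> {1..n} then 1 else if w \<in> {n+1..n+(n-2)} then 3 else 0)" for w
      unfolding dg d0 E(2)[rule_format] using 3 by auto
    have V: "?V0 \<union> {n} = {1..n} \<union> {n+1..n+(n-2)}" using 3 by auto
    have l: "{v \<in> {1..n} \<union> {n+1..n+(n-2)}. degree (insert {n + (n-2), n} (E \<union> {})) v \<le> 1} = {1..n}"
      unfolding dgf by auto
    have i: "\<forall>v\<in>{1..n} \<union> {n+1..n+(n-2)}. v \<notin> {1..n} \<longrightarrow> degree (insert {n + (n-2), n} (E \<union> {})) v = 3"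
      unfolding dgf by auto
    have "is_tree ({1..n} \<union> {n+1..n+(n-2)}) (insert {n + (n-2), n} (E \<union> {}))"
      using t V tree_iff by simp
    then have "ising_model n ({1..n} \<union> {n+1..n+(n-2)}, insert {n + (n-2), n} (E \<union> {}), \<lambda>_. 0)"
      unfolding ising_model_def using l i by simp
    then show ?thesis by blast
  qed
qed

lemma exists_relabel:
  assumes m: "ising_model n (V, E, \<theta>)" and n: "1 \<le> n"
  shows "\<exists>f. inj_on f V \<and> (\<forall>i\<in>{1..n}. f i = i) \<and> f ` V \<subseteq> {1..3*n}"
proof -
  note vb = vertex_bound[OF m n]
  note I = ising_facts[OF m]
  let ?V' = "V - {1..n}"
  define k where "k = card ?V'"
  have fV': "finite ?V'" using vb(3) by simp
  have ck: "card {n+1..<n+1+k} = k" by simp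
  obtain h where h: "bij_betw h ?V' {n+1..<n+1+k}"
    using finite_same_card_bij[OF fV', of "{n+1..<n+1+k}"] ck k_def by auto
  define f where "f = (\<lambda>w. if w \<in> {1..n} then w else h w)"
  have kk: "k = card V - n" unfolding k_def using I(2) vb(3) by (simp add: card_Diff_subset)
  have hr: "h w \<in> {n+1..<n+1+k}" if "w \<in> ?V'" for w using h that by (meson bij_betwE)
  have inj: "inj_on f V"
  proof (rule inj_onI)
    fix a b assume a: "a \<in> V" and b: "b \<in> V" and eq: "f a = f b"
    show "a = b"
    proof (cases "a \<in> {1..n}"; cases "b \<in> {1..n}")
      assume "a \<in> {1..n}" "b \<in> {1..n}" then show ?thesis using eq unfolding f_def by simp
    next
      assume x: "a \<in> {1..n}" "b \<notin> {1..n}"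
      then have "h b \<in> {n+1..<n+1+k}" using hr b by blast
      then show ?thesis using eq x unfolding f_def by auto
    next
      assume x: "a \<notin> {1..n}" "b \<in> {1..n}"
      then have "h a \<in> {n+1..<n+1+k}" using hr a by blast
      then show ?thesis using eq x unfolding f_def by auto
    next
      assume x: "a \<notin> {1..n}" "b \<notin> {1..n}"
      have "f a = h a" "f b = h b" using x unfolding f_def by auto
      then have "h a = h b" using eq by simp
      then show ?thesis using h x a b unfolding bij_betw_def inj_on_def by blast
    qed
  qed
  have img: "f ` V \<subseteq> {1..3*n}"
  proof
    fix j assume "j \<in> f ` V"
    then obtain w where w: "w \<in> V" "j = f w" by blast
    show "j \<in> {1..3*n}"
    proof (cases "w \<in> {1..n}")
      case True then show ?thesis using w unfolding f_def by auto
    next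
      case False
      then have "h w \<in> {n+1..<n+1+k}" using hr w by blast
      moreover have "n + k \<le> 3 * n" using kk vb(1) by linarith
      ultimately show ?thesis using w False unfolding f_def by auto
    qed
  qed
  have fx: "\<forall>i\<in>{1..n}. f i = i" unfolding f_def by simp
  show ?thesis using inj img fx by blast
qed



definition rnd :: "nat \<Rightarrow> nat set set \<Rightarrow> (nat set \<Rightarrow> real) \<Rightarrow> nat set \<Rightarrow> real" where
  "rnd N E \<theta> = (\<lambda>e. if e \<in> E then of_int \<lfloor>real N * \<theta> e\<rfloor> / real N else 0)"

lemma floor_range:
  assumes N: "1 \<le> N" and t: "\<bar>t\<bar> \<le> 1"
  shows "\<lfloor>real N * t\<rfloor> \<in> {- int N..int N}"
proof -
  have t1: "-1 \<le> t" "t \<le> 1" using t by (auto simp: abs_le_iff)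
  have "real N * (-1) \<le> real N * t" using t1(1) by (intro mult_left_mono) auto
  moreover have "real N * t \<le> real N * 1" using t1(2) by (intro mult_left_mono) auto
  ultimately have l: "- real N \<le> real N * t" "real N * t \<le> real N" by auto
  have "\<lfloor>- real N\<rfloor> \<le> \<lfloor>real N * t\<rfloor>" using l(1) by (rule floor_mono)
  moreover have "\<lfloor>real N * t\<rfloor> \<le> \<lfloor>real N\<rfloor>" using l(2) by (rule floor_mono)
  moreover have "\<lfloor>real N\<rfloor> = int N" by simp
  moreover have "\<lfloor>- real N\<rfloor> = - int N"
  proof -
    have "- real N = of_int (- int N)" by simp
    then show ?thesis by (metis floor_of_int)
  qed
  ultimately show ?thesis by simp
qed

lemma rnd_props:
  assumes N: "1 \<le> N" and t: "\<bar>t\<bar> \<le> 1"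
  shows "\<bar>of_int \<lfloor>real N * t\<rfloor> / real N\<bar> \<le> 1" "\<bar>t - of_int \<lfloor>real N * t\<rfloor> / real N\<bar> \<le> 1 / real N"
proof -
  have Np: "0 < real N" using N by simp
  have r: "\<lfloor>real N * t\<rfloor> \<in> {- int N..int N}" by (rule floor_range[OF N t])
  then have "- real N \<le> of_int \<lfloor>real N * t\<rfloor>" "of_int \<lfloor>real N * t\<rfloor> \<le> real N" by auto
  then show "\<bar>of_int \<lfloor>real N * t\<rfloor> / real N\<bar> \<le> 1" using Np by (auto simp: abs_le_iff field_simps)
  have a: "of_int \<lfloor>real N * t\<rfloor> \<le> real N * t" "real N * t < of_int \<lfloor>real N * t\<rfloor> + 1" by linarith+
  have eq: "t - of_int \<lfloor>real N * t\<rfloor> / real N = (real N * t - of_int \<lfloor>real N * t\<rfloor>) / real N"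
    using Np by (simp add: field_simps)
  have "0 \<le> (real N * t - of_int \<lfloor>real N * t\<rfloor>) / real N" using a(1) Np by simp
  moreover have "(real N * t - of_int \<lfloor>real N * t\<rfloor>) / real N \<le> 1 / real N"
  proof (rule divide_right_mono)
    show "real N * t - of_int \<lfloor>real N * t\<rfloor> \<le> 1" using a(2) by linarith
  qed (use Np in simp)
  ultimately have "0 \<le> t - of_int \<lfloor>real N * t\<rfloor> / real N" "t - of_int \<lfloor>real N * t\<rfloor> / real N \<le> 1 / real N"
    unfolding eq by auto
  then show "\<bar>t - of_int \<lfloor>real N * t\<rfloor> / real N\<bar> \<le> 1 / real N" by simp
qed

lemma round_ising:
  assumes m: "ising_model n (V, E, \<theta>)" and N: "1 \<le> N"
  shows "ising_model n (V, E, rnd N E \<theta>)"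
proof -
  have b: "\<forall>e\<in>E. \<bar>\<theta> e\<bar> \<le> 1" using ising_facts[OF m] by simp
  have "\<forall>e\<in>E. -1 \<le> rnd N E \<theta> e \<and> rnd N E \<theta> e \<le> 1"
  proof
    fix e assume e: "e \<in> E"
    have "\<bar>of_int \<lfloor>real N * \<theta> e\<rfloor> / real N\<bar> \<le> 1" using rnd_props(1)[OF N] b e by blast
    then show "-1 \<le> rnd N E \<theta> e \<and> rnd N E \<theta> e \<le> 1" unfolding rnd_def using e by (simp only: if_True abs_le_iff) simp
  qed
  then show ?thesis using m unfolding ising_model_def by simp
qed

lemma round_tv:
  assumes m: "ising_model n (V, E, \<theta>)" and N: "1 \<le> N"
  shows "tv_dist n (leaf_dist n (V, E, \<theta>)) (leaf_dist n (V, E, rnd N E \<theta>)) \<le> real (card E) / (2 * real N)"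
proof -
  note I = ising_facts[OF m]
  have b': "\<forall>e\<in>E. \<bar>rnd N E \<theta> e\<bar> \<le> 1" using ising_facts[OF round_ising[OF m N]] by simp
  have "tv_dist n (leaf_dist n (V, E, \<theta>)) (leaf_dist n (V, E, rnd N E \<theta>)) \<le> (\<Sum>e\<in>E. \<bar>\<theta> e - rnd N E \<theta> e\<bar>) / 2"
    by (rule tv_same_tree[OF I(1) I(2) I(3) b'])
  also have "(\<Sum>e\<in>E. \<bar>\<theta> e - rnd N E \<theta> e\<bar>) \<le> (\<Sum>e\<in>E. 1 / real N)"
    using rnd_props(2)[OF N] I(3) unfolding rnd_def by (intro sum_mono) auto
  finally show ?thesis by (simp add: field_simps)
qed



definition grid :: "nat \<Rightarrow> real set" where
  "grid N = (\<lambda>k::int. of_int k / real N) ` {- int N..int N}"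

definition pairs :: "nat \<Rightarrow> nat set set" where
  "pairs m = {e. e \<subseteq> {1..m} \<and> card e = 2}"

definition opts :: "nat \<Rightarrow> nat \<Rightarrow> (nat set \<times> real) option set" where
  "opts m N = insert None (Some ` (pairs m \<times> grid N))"

definition codes :: "nat \<Rightarrow> nat \<Rightarrow> (nat set \<times> (nat \<Rightarrow> (nat set \<times> real) option)) set" where
  "codes m N = Pow {1..m} \<times> ({..<m} \<rightarrow>\<^sub>E opts m N)"

definition Hs :: "nat \<Rightarrow> (nat \<Rightarrow> (nat set \<times> real) option) \<Rightarrow> (nat set \<times> real) set" where
  "Hs m h = {p. Some p \<in> h ` {..<m}}"

definition decode :: "nat \<Rightarrow> nat set \<times> (nat \<Rightarrow> (nat set \<times> real) option) \<Rightarrow> ising" where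
  "decode m c = (case c of (V, h) \<Rightarrow>
     (V, fst ` Hs m h, \<lambda>e. if e \<in> fst ` Hs m h then (SOME t. (e, t) \<in> Hs m h) else 0))"

definition family :: "nat \<Rightarrow> nat \<Rightarrow> nat \<Rightarrow> ising set" where
  "family n m N = {M \<in> decode m ` codes m N. ising_model n M}"

lemma finite_grid: "finite (grid N)" unfolding grid_def by simp

lemma card_grid: "card (grid N) \<le> 2 * N + 1"
proof -
  have "card (grid N) \<le> card {- int N..int N}" unfolding grid_def by (rule card_image_le) simp
  also have "\<dots> = 2 * N + 1" by simp
  finally show ?thesis .
qed

lemma card_pairs: "2 \<le> m \<Longrightarrow> card (pairs m) \<le> m ^ 2"
proof -
  assume m: "2 \<le> m"
  have "pairs m = {B. B \<subseteq> {1..m} \<and> card B = 2}" unfolding pairs_def by simp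
  then have "card (pairs m) = m choose 2" using n_subsets[of "{1..m}" 2] by simp
  also have "\<dots> \<le> m ^ 2" using binomial_le_pow[OF m] .
  finally show ?thesis .
qed

lemma finite_pairs: "finite (pairs m)"
proof -
  have "pairs m \<subseteq> Pow {1..m}" unfolding pairs_def by blast
  then show ?thesis by (rule finite_subset) simp
qed

lemma card_opts: "2 \<le> m \<Longrightarrow> card (opts m N) \<le> 1 + m ^ 2 * (2 * N + 1)"
proof -
  assume m: "2 \<le> m"
  have f: "finite (pairs m \<times> grid N)" using finite_pairs finite_grid by simp
  have "card (opts m N) \<le> Suc (card (Some ` (pairs m \<times> grid N)))"
    unfolding opts_def by (rule card_insert_le_m1) (use f in auto)
  also have "card (Some ` (pairs m \<times> grid N)) \<le> card (pairs m \<times> grid N)" by (rule card_image_le[OF f])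
  also have "\<dots> = card (pairs m) * card (grid N)" by (rule card_cartesian_product)
  also have "\<dots> \<le> m ^ 2 * (2 * N + 1)" using card_pairs[OF m] card_grid by (intro mult_mono) auto
  finally show ?thesis by simp
qed

lemma finite_opts: "finite (opts m N)"
  unfolding opts_def using finite_pairs finite_grid by simp

lemma finite_codes: "finite (codes m N)"
  unfolding codes_def using finite_opts by (intro finite_cartesian_product finite_PiE) auto

lemma card_codes: "2 \<le> m \<Longrightarrow> card (codes m N) \<le> 2 ^ m * (1 + m ^ 2 * (2 * N + 1)) ^ m"
proof -
  assume m: "2 \<le> m"
  have "card (codes m N) = card (Pow {1..m}) * card ({..<m} \<rightarrow>\<^sub>E opts m N)"
    unfolding codes_def by (rule card_cartesian_product)
  also have "card (Pow {1..m}) = 2 ^ m" by (simp add: card_Pow)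
  also have "card ({..<m} \<rightarrow>\<^sub>E opts m N) = card (opts m N) ^ m" by (simp add: card_funcsetE)
  also have "\<dots> \<le> (1 + m ^ 2 * (2 * N + 1)) ^ m" using card_opts[OF m] by (rule power_mono) simp
  finally show ?thesis by simp
qed

lemma finite_family: "finite (family n m N)"
  unfolding family_def using finite_codes by simp

lemma card_family: "2 \<le> m \<Longrightarrow> card (family n m N) \<le> 2 ^ m * (1 + m ^ 2 * (2 * N + 1)) ^ m"
proof -
  assume m: "2 \<le> m"
  have "card (family n m N) \<le> card (decode m ` codes m N)"
    unfolding family_def using finite_codes by (intro card_mono) auto
  also have "\<dots> \<le> card (codes m N)" using finite_codes by (rule card_image_le)
  also have "\<dots> \<le> 2 ^ m * (1 + m ^ 2 * (2 * N + 1)) ^ m" using card_codes[OF m] .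
  finally show ?thesis .
qed

lemma in_family:
  assumes mo: "ising_model n (V, E, \<theta>)" and N: "1 \<le> N" and Vm: "V \<subseteq> {1..m}" and Em: "card E \<le> m"
  shows "(V, E, rnd N E \<theta>) \<in> family n m N"
proof -
  note I = ising_facts[OF mo]
  have ok: "edges_ok V E" and fE: "finite E" using tree_ind_basic[OF I(1)] by auto
  let ?t = "rnd N E \<theta>"
  define k where "k = card E"
  obtain \<phi> where \<phi>: "bij_betw \<phi> {0..<k} E" using ex_bij_betw_nat_finite[OF fE] k_def by auto
  define h where "h = (\<lambda>i\<in>{..<m}. if i < k then Some (\<phi> i, ?t (\<phi> i)) else None)"
  have km: "k \<le> m" using Em k_def by simp
  have \<phi>E: "\<phi> i \<in> E" if "i < k" for i using \<phi> that by (auto dest: bij_betwE)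
  have tg: "?t e \<in> grid N" if "e \<in> E" for e
    using floor_range[OF N] I(3) that unfolding rnd_def grid_def by auto
  have ep: "e \<in> pairs m" if "e \<in> E" for e
    using edges_ok_sub[OF ok that] edges_ok_card[OF ok that] Vm unfolding pairs_def by auto
  have hc: "h \<in> {..<m} \<rightarrow>\<^sub>E opts m N"
    unfolding h_def opts_def using \<phi>E tg ep by (auto simp: PiE_iff)
  have H: "Hs m h = (\<lambda>e. (e, ?t e)) ` E"
  proof
    show "Hs m h \<subseteq> (\<lambda>e. (e, ?t e)) ` E"
    proof
      fix p assume "p \<in> Hs m h"
      then obtain i where i: "i < m" "Some p = h i" unfolding Hs_def by auto
      then have "i < k" "p = (\<phi> i, ?t (\<phi> i))" unfolding h_def by (auto split: if_splits)
      then show "p \<in> (\<lambda>e. (e, ?t e)) ` E" using \<phi>E by blast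
    qed
    show "(\<lambda>e. (e, ?t e)) ` E \<subseteq> Hs m h"
    proof
      fix p assume "p \<in> (\<lambda>e. (e, ?t e)) ` E"
      then obtain e where e: "e \<in> E" "p = (e, ?t e)" by blast
      then obtain i where i: "i < k" "\<phi> i = e" using \<phi> unfolding bij_betw_def by force
      then have "h i = Some p" "i < m" unfolding h_def using e km by auto
      then show "p \<in> Hs m h" unfolding Hs_def by force
    qed
  qed
  have fH: "fst ` Hs m h = E" unfolding H by force
  have sm: "(SOME t. (e, t) \<in> Hs m h) = ?t e" if "e \<in> E" for e
    unfolding H by (rule some_equality) (use that in auto)
  have th: "(\<lambda>e. if e \<in> fst ` Hs m h then (SOME t. (e, t) \<in> Hs m h) else 0) = ?t"
  proof
    fix e show "(if e \<in> fst ` Hs m h then (SOME t. (e, t) \<in> Hs m h) else 0) = ?t e"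
      using sm unfolding fH by (cases "e \<in> E") (auto simp: rnd_def)
  qed
  have th': "(\<lambda>e. if e \<in> E then (SOME t. (e, t) \<in> Hs m h) else 0) = ?t" using th unfolding fH .
  have dec: "decode m (V, h) = (V, E, ?t)" unfolding decode_def prod.case fH th' ..
  have "(V, h) \<in> codes m N" unfolding codes_def using Vm hc by auto
  then have "(V, E, ?t) \<in> decode m ` codes m N" using dec by force
  then show ?thesis unfolding family_def using round_ising[OF mo N] by simp
qed



lemma real_bound:
  fixes n :: nat and \<epsilon> :: real
  assumes n: "2 \<le> n" and e0: "0 < \<epsilon>" and e1: "\<epsilon> < 1"
  shows "ln (real (2 ^ (3 * n) * (1 + (3 * n) ^ 2 * (2 * nat \<lceil>2 * real n / \<epsilon>\<rceil> + 1)) ^ (3 * n)))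
         \<le> 30 * real n * ln (real n / \<epsilon>)"
proof -
  define N where "N = nat \<lceil>2 * real n / \<epsilon>\<rceil>"
  define q where "q = real n / \<epsilon>"
  define X where "X = 1 + real (3 * n) ^ 2 * (2 * real N + 1)"
  have rn: "2 \<le> real n" using n by simp
  have q2: "2 \<le> q" unfolding q_def using rn e0 e1 by (simp add: field_simps)
  have qge: "real n \<le> q" unfolding q_def using e0 e1 rn by (simp add: field_simps)
  have L: "ln 2 \<le> ln q" using q2 by simp
  have ln2: "0 < ln (2::real)" by simp
  have Nle: "real N \<le> 2 * q + 1"
  proof -
    have "0 \<le> 2 * real n / \<epsilon>" using e0 by simp
    then have "real N = of_int \<lceil>2 * real n / \<epsilon>\<rceil>" unfolding N_def by simp
    also have "\<dots> \<le> 2 * real n / \<epsilon> + 1" by linarith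
    finally show ?thesis unfolding q_def by simp
  qed
  have Xpos: "0 < X" unfolding X_def by (simp add: add_pos_nonneg)
  have "real n ^ 2 * (2 * real N + 1) \<le> real n ^ 2 * (4 * q + 3)" using Nle by (intro mult_left_mono) auto
  then have "X \<le> 1 + 9 * real n ^ 2 * (4 * q + 3)" unfolding X_def by (simp add: power_mult_distrib)
  also have "\<dots> \<le> 64 * q ^ 3"
  proof -
    have a: "real n ^ 2 \<le> q ^ 2" using qge rn by (intro power_mono) auto
    have b: "9 * real n ^ 2 * (4 * q + 3) \<le> 9 * q ^ 2 * (4 * q + 3)"
      using a q2 by (intro mult_right_mono mult_left_mono) auto
    have c: "1 + 9 * q ^ 2 * (4 * q + 3) \<le> 64 * q ^ 3"
    proof -
      have qq: "0 \<le> q * q" by simp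
      have h2: "2 * (q * q) \<le> q * q * q" using mult_right_mono[OF q2 qq] by (simp add: mult_ac)
      have h0: "4 \<le> q * q" using mult_mono[OF q2 q2] q2 by simp
      have h1: "1 \<le> q * q * q" using h0 h2 by linarith
      have e: "9 * (q * q) * (4 * q + 3) = 36 * (q * q * q) + 27 * (q * q)" by (simp add: algebra_simps)
      show ?thesis unfolding power3_eq_cube power2_eq_square using e h1 h2 by linarith
    qed
    show ?thesis using b c by linarith
  qed
  finally have Xle: "X \<le> 64 * q ^ 3" .
  have lnX: "ln X \<le> 6 * ln 2 + 3 * ln q"
  proof -
    have "ln X \<le> ln (64 * q ^ 3)" using Xle Xpos by (rule ln_le_cancel_iff[THEN iffD2, rotated 2]) (use q2 in auto)
    also have "\<dots> = ln 64 + 3 * ln q" using q2 by (simp add: ln_mult ln_realpow)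
    also have "ln (64::real) = 6 * ln 2"
    proof -
      have "ln ((2::real) ^ 6) = real 6 * ln 2" by (rule ln_realpow)
      then show ?thesis by simp
    qed
    finally show ?thesis by simp
  qed
  have eq: "real (2 ^ (3 * n) * (1 + (3 * n) ^ 2 * (2 * N + 1)) ^ (3 * n)) = 2 ^ (3 * n) * X ^ (3 * n)"
    unfolding X_def by (simp add: algebra_simps)
  have "ln (2 ^ (3 * n) * X ^ (3 * n)) = real (3 * n) * ln 2 + real (3 * n) * ln X"
    using Xpos by (simp add: ln_mult ln_realpow)
  also have "\<dots> \<le> real (3 * n) * ln 2 + real (3 * n) * (6 * ln 2 + 3 * ln q)"
    using lnX by (intro add_left_mono mult_left_mono) auto
  also have "\<dots> = real (3 * n) * (7 * ln 2 + 3 * ln q)" by (simp add: algebra_simps)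
  also have "\<dots> \<le> real (3 * n) * (10 * ln q)" using L by (intro mult_left_mono) auto
  also have "\<dots> = 30 * real n * ln q" by simp
  finally show ?thesis unfolding eq[unfolded N_def] q_def N_def .
qed



lemma single_model: "ising_model 1 ({1}, {}, \<lambda>_. 0)"
  unfolding ising_model_def using tree_iff tree_ind.single[of 1] by (auto simp: degree_def)

lemma case_one:
  assumes e0: "0 < \<epsilon>" and e1: "\<epsilon> < 1"
  shows "\<exists>\<C>::ising set. finite \<C> \<and> \<C> \<noteq> {} \<and> (\<forall>M\<in>\<C>. ising_model 1 M) \<and>
       ln (real (card \<C>)) \<le> 30 * real (1::nat) * ln (real (1::nat) / \<epsilon>) \<and>
       (\<forall>M. ising_model 1 M \<longrightarrow>
          (\<exists>M'\<in>\<C>. tv_dist 1 (leaf_dist 1 M) (leaf_dist 1 M') \<le> \<epsilon>))"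
proof (intro exI[of _ "{({1}, {}, \<lambda>_. 0)}"] conjI allI impI)
  show "finite {({1::nat}, {}, \<lambda>_. 0::real)}" by simp
  show "{({1::nat}, {}, \<lambda>_. 0::real)} \<noteq> {}" by simp
  show "\<forall>M\<in>{({1}, {}, \<lambda>_. 0)}. ising_model 1 M" using single_model by simp
  have "0 < ln (1 / \<epsilon>)" using e0 e1 by simp
  then show "ln (real (card {({1::nat}, {}, \<lambda>_. 0::real)})) \<le> 30 * real (1::nat) * ln (real (1::nat) / \<epsilon>)"
    by simp
  fix M assume m: "ising_model 1 M"
  obtain V E \<theta> where M: "M = (V, E, \<theta>)" by (cases M) auto
  have m': "ising_model 1 (V, E, \<theta>)" using m M by simp
  note vb = vertex_bound[OF m']
  have "{1} \<subseteq> V" using ising_facts(2)[OF m'] by simp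
  moreover have "card V \<le> 1" using vb(1) by simp
  ultimately have V: "V = {1}"
  proof -
    have "1 \<in> V" using \<open>{1} \<subseteq> V\<close> by simp
    then have "card {1::nat} \<le> card V" using vb(3) \<open>{1} \<subseteq> V\<close> by (intro card_mono) auto
    then have "card V = 1" using \<open>card V \<le> 1\<close> by simp
    then obtain x where "V = {x}" by (rule card_1_singletonE)
    then show ?thesis using \<open>1 \<in> V\<close> by simp
  qed
  then have "card E = 0" using vb(2) by simp
  then have E: "E = {}" using vb(4) by simp
  have "leaf_dist 1 M = leaf_dist 1 ({1}, {}, \<lambda>_. 0)"
    unfolding M V E leaf_dist_def partition_fn_def weight_def by simp
  then have "tv_dist 1 (leaf_dist 1 M) (leaf_dist 1 ({1}, {}, \<lambda>_. 0)) = 0"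
    unfolding tv_dist_def by simp
  then show "\<exists>M'\<in>{({1}, {}, \<lambda>_. 0)}. tv_dist 1 (leaf_dist 1 M) (leaf_dist 1 M') \<le> \<epsilon>" using e0 by simp
qed



lemma case_big:
  assumes n: "2 \<le> n" and e0: "0 < \<epsilon>" and e1: "\<epsilon> < 1"
  shows "\<exists>\<C>::ising set. finite \<C> \<and> \<C> \<noteq> {} \<and> (\<forall>M\<in>\<C>. ising_model n M) \<and>
       ln (real (card \<C>)) \<le> 30 * real n * ln (real n / \<epsilon>) \<and>
       (\<forall>M. ising_model n M \<longrightarrow>
          (\<exists>M'\<in>\<C>. tv_dist n (leaf_dist n M) (leaf_dist n M') \<le> \<epsilon>))"
proof -
  define N where "N = nat \<lceil>2 * real n / \<epsilon>\<rceil>"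
  define m where "m = 3 * n"
  define C where "C = family n m N"
  have n1: "1 \<le> n" using n by simp
  have rn: "2 \<le> real n" using n by simp
  have Nr: "2 * real n / \<epsilon> \<le> real N"
  proof -
    have "0 \<le> 2 * real n / \<epsilon>" using e0 by simp
    then have "real N = of_int \<lceil>2 * real n / \<epsilon>\<rceil>" unfolding N_def by simp
    then show ?thesis by linarith
  qed
  have Npos: "0 < 2 * real n / \<epsilon>" using e0 rn by simp
  have N1: "1 \<le> N" using Nr Npos by linarith
  have cover: "\<exists>M'\<in>C. tv_dist n (leaf_dist n M) (leaf_dist n M') \<le> \<epsilon>" if mo: "ising_model n M" for M
  proof -
    obtain V E \<theta> where M: "M = (V, E, \<theta>)" by (cases M) auto
    have m0: "ising_model n (V, E, \<theta>)" using mo M by simp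
    obtain f where f: "inj_on f V" "\<forall>i\<in>{1..n}. f i = i" "f ` V \<subseteq> {1..3*n}"
      using exists_relabel[OF m0 n1] by blast
    define V' where "V' = f ` V"
    define E' where "E' = (`) f ` E"
    define \<theta>' where "\<theta>' = (\<lambda>e. \<theta> (inv_into V f ` e))"
    have rl: "relabel f (V, E, \<theta>) = (V', E', \<theta>')" unfolding relabel_def V'_def E'_def \<theta>'_def by simp
    have m1: "ising_model n (V', E', \<theta>')" using relabel_ising[OF m0 f(1,2)] rl by simp
    have ld: "leaf_dist n (V, E, \<theta>) = leaf_dist n (V', E', \<theta>')" using relabel_leaf[OF m0 f(1,2)] rl by simp
    note vb = vertex_bound[OF m1 n1]
    have cE: "card E' \<le> m" using vb(1,2) unfolding m_def by linarith
    have Vm: "V' \<subseteq> {1..m}" using f(3) unfolding V'_def m_def .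
    have inC: "(V', E', rnd N E' \<theta>') \<in> C" unfolding C_def by (rule in_family[OF m1 N1 Vm cE])
    have tv: "tv_dist n (leaf_dist n (V', E', \<theta>')) (leaf_dist n (V', E', rnd N E' \<theta>')) \<le> real (card E') / (2 * real N)"
      by (rule round_tv[OF m1 N1])
    have "real (card E') \<le> 3 * real n" using cE unfolding m_def by simp
    then have "real (card E') / (2 * real N) \<le> 3 * real n / (2 * real N)"
      using N1 by (intro divide_right_mono) auto
    also have "\<dots> \<le> 3 * real n / (2 * (2 * real n / \<epsilon>))"
    proof (rule divide_left_mono)
      show "2 * (2 * real n / \<epsilon>) \<le> 2 * real N" using Nr by simp
      show "0 \<le> 3 * real n" by simp
      have "0 < 2 * real N" using N1 by simp
      then show "0 < 2 * real N * (2 * (2 * real n / \<epsilon>))" using Npos by (intro mult_pos_pos) auto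
    qed
    also have "\<dots> = 3 / 4 * \<epsilon>" using rn e0 by (simp add: field_simps)
    also have "\<dots> \<le> \<epsilon>" using e0 by simp
    finally have "tv_dist n (leaf_dist n M) (leaf_dist n (V', E', rnd N E' \<theta>')) \<le> \<epsilon>"
      using tv unfolding M ld by linarith
    then show ?thesis using inC by blast
  qed
  obtain V0 E0 where "ising_model n (V0, E0, \<lambda>_. 0)" using exists_model[OF n1] by blast
  then have ne: "C \<noteq> {}" using cover by blast
  have fin: "finite C" unfolding C_def by (rule finite_family)
  have m2: "2 \<le> m" unfolding m_def using n by simp
  have cc: "card C \<le> 2 ^ m * (1 + m ^ 2 * (2 * N + 1)) ^ m" unfolding C_def by (rule card_family[OF m2])
  have cpos: "0 < card C" using fin ne by (simp add: card_gt_0_iff)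
  have r: "real (card C) \<le> real (2 ^ m * (1 + m ^ 2 * (2 * N + 1)) ^ m)"
    using cc by (simp only: of_nat_le_iff)
  have p: "0 < real (card C)" using cpos by simp
  then have p2: "0 < real (2 ^ m * (1 + m ^ 2 * (2 * N + 1)) ^ m)" using r by linarith
  have "ln (real (card C)) \<le> ln (real (2 ^ m * (1 + m ^ 2 * (2 * N + 1)) ^ m))"
    using ln_le_cancel_iff[OF p p2] r by blast
  also have "\<dots> \<le> 30 * real n * ln (real n / \<epsilon>)"
    unfolding m_def N_def by (rule real_bound[OF n e0 e1])
  finally have lc: "ln (real (card C)) \<le> 30 * real n * ln (real n / \<epsilon>)" .
  have all: "\<forall>M\<in>C. ising_model n M" unfolding C_def family_def by simp
  show ?thesis using fin ne all lc cover by blast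
qed

theorem lemma17:
  shows "\<exists>K::real. \<forall>n::nat. \<forall>\<epsilon>::real. n \<ge> 1 \<and> 0 < \<epsilon> \<and> \<epsilon> < 1 \<longrightarrow>
    (\<exists>\<C>::ising set. finite \<C> \<and> \<C> \<noteq> {} \<and> (\<forall>M\<in>\<C>. ising_model n M) \<and>
       ln (real (card \<C>)) \<le> K * real n * ln (real n / \<epsilon>) \<and>
       (\<forall>M. ising_model n M \<longrightarrow>
          (\<exists>M'\<in>\<C>. tv_dist n (leaf_dist n M) (leaf_dist n M') \<le> \<epsilon>)))"
proof (intro exI[of _ 30] allI impI)
  fix n :: nat and \<epsilon> :: real
  assume h: "n \<ge> 1 \<and> 0 < \<epsilon> \<and> \<epsilon> < 1"
  show "\<exists>\<C>::ising set. finite \<C> \<and> \<C> \<noteq> {} \<and> (\<forall>M\<in>\<C>. ising_model n M) \<and>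
       ln (real (card \<C>)) \<le> 30 * real n * ln (real n / \<epsilon>) \<and>
       (\<forall>M. ising_model n M \<longrightarrow>
          (\<exists>M'\<in>\<C>. tv_dist n (leaf_dist n M) (leaf_dist n M') \<le> \<epsilon>))"
  proof (cases "n = 1")
    case True
    then show ?thesis using case_one[of \<epsilon>] h by simp
  next
    case False
    then have "2 \<le> n" using h by simp
    then show ?thesis using case_big[of n \<epsilon>] h by simp
  qed
qed

end
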